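(* Let $x_1,\ldots,x_n,y_1,\ldots,y_p$ be self-adjoint elements of a unital C$^*$-algebra $\mathcal A$ such that $y_1,\ldots,y_p$ belong to the C$^*$-subalgebra of $\mathcal A$ generated by $x_1,\ldots,x_n$. Then for every $\omega>0$, $$\mathfrak K_{top}^{(2)}(x_1,\ldots,x_n;4\omega)\le\mathfrak K_{top}^{(2)}(x_1,\ldots,x_n:y_1,\ldots,y_p;2\omega)\le\mathfrak K_{top}^{(2)}(x_1,\ldots,x_n;\omega).$$
   Context: Microstates. Let $\mathcal A$ be a unital C$^*$-algebra and $x_1,\dots,x_n,y_1,\dots,y_m$ self-adjoint elements of $\mathcal A$. Let $\{P_r\}_{r\ge1}$ enumerate all noncommutative polynomials in the indeterminates $X_1,\dots,X_n,Y_1,\dots,Y_m$ whose coefficients have rational real and imaginary parts (constants allowed). $\mathcal M_k^{s.a.}(\mathbb C)$ is the set of self-adjoint $k\times k$ complex matrices and $\tau_k=\frac1k\mathrm{Tr}$. For $R,\epsilon>0$ and $r,k\in\mathbb N$, $\Gamma_R^{(top)}(x_1,\dots,x_n:y_1,\dots,y_m;k,\epsilon,P_1,\dots,P_r)$ is the set of $(A_1,\dots,A_n)\in\mathcal M_k^{s.a.}(\mathbb C)^n$ for which there exist $B_1,\dots,B_m\in\mathcal M_k^{s.a.}(\mathbb C)$ with $\max_{i,j}\{\|A_i\|,\|B_j\|\}\le R$ and $\big|\|P_j(A_1,\dots,A_n,B_1,\dots,B_m)\|-\|P_j(x_1,\dots,x_n,y_1,\dots,y_m)\|\big|\le\epsilon$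 for $1\le j\le r$. When $m=0$ it is written $\Gamma_R^{(top)}(x_1,\dots,x_n;k,\epsilon,P_1,\dots,P_r)$. Covering numbers. On $\mathcal M_k(\mathbb C)^n$ put $\|(A_i)\|_2=(\sum_i\tau_k(A_i^*A_i))^{1/2}$. The $\omega$-orbit ball centred at $(B_i)$ is the set of $(A_i)$ such that some unitary $W\in\mathcal M_k(\mathbb C)$ satisfies $\|(A_i)-(WB_iW^* )\|_2<\omega$; for $\Sigma\subseteq\mathcal M_k(\mathbb C)^n$, $o_2(\Sigma,\omega)$ is the minimal number of $\omega$-orbit balls centred at points of $\Sigma$ covering $\Sigma$. Convention $\log 0=-\infty$. Topological orbit dimension: $\mathfrak K^{(2)}_{top}(x:y;\omega)=\sup_{R>0}\inf_{\epsilon>0,r\in\mathbb N}\limsup_{k\to\infty}\frac{\log o_2(\Gamma_R^{(top)}(x:y;k,\epsilon,P_1,\dots,P_r),\omega)}{k^2}$; when $m=0$ the "$:y$" part is omitted. *)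

theory Defs
  imports "HOL-Analysis.Analysis" "HOL-Library.Poly_Mapping" "HOL-Library.Liminf_Limsup"
          "Jordan_Normal_Form.Matrix"
begin

class cstar_algebra = real_normed_algebra_1 + banach +
  fixes scaleC :: "complex \<Rightarrow> 'a \<Rightarrow> 'a"
    and adj :: "'a \<Rightarrow> 'a"
  assumes scaleC_add_right: "scaleC c (a + b) = scaleC c a + scaleC c b"
    and scaleC_add_left: "scaleC (c + d) a = scaleC c a + scaleC d a"
    and scaleC_scaleC: "scaleC c (scaleC d a) = scaleC (c * d) a"
    and scaleC_of_real: "scaleC (complex_of_real r) a = scaleR r a"
    and scaleC_mult_left: "scaleC c (a * b) = scaleC c a * b"
    and scaleC_mult_right: "scaleC c (a * b) = a * scaleC c b"
    and norm_scaleC: "norm (scaleC c a) = cmod c * norm a"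
    and adj_adj: "adj (adj a) = a"
    and adj_add: "adj (a + b) = adj a + adj b"
    and adj_scaleC: "adj (scaleC c a) = scaleC (cnj c) (adj a)"
    and adj_mult: "adj (a * b) = adj b * adj a"
    and cstar_identity: "norm (adj a * a) = (norm a)\<^sup>2"

definition cstar_subalgebra :: "'a::cstar_algebra set \<Rightarrow> bool" where
  "cstar_subalgebra B \<longleftrightarrow> closed B \<and> 1 \<in> B \<and>
     (\<forall>a\<in>B. \<forall>b\<in>B. a + b \<in> B \<and> a * b \<in> B) \<and>
     (\<forall>c. \<forall>a\<in>B. scaleC c a \<in> B) \<and> (\<forall>a\<in>B. adj a \<in> B)"

definition cstar_generated :: "'a::cstar_algebra set \<Rightarrow> 'a set" where
  "cstar_generated S = \<Inter> {B. cstar_subalgebra B \<and> S \<subseteq> B}"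

text \<open>A noncommutative polynomial in the variables 0,1,2,... is a finitely supported
  map from words (lists of variable indices) to complex coefficients.
  Variables X_1..X_n are 0..n-1, Y_1..Y_m are n..n+m-1.\<close>

type_synonym ncpoly = "nat list \<Rightarrow>\<^sub>0 complex"

definition rat_ncpolys :: "nat \<Rightarrow> ncpoly set" where
  "rat_ncpolys N = {p. \<forall>w\<in>Poly_Mapping.keys p. set w \<subseteq> {..<N} \<and>
      Re (Poly_Mapping.lookup p w) \<in> \<rat> \<and> Im (Poly_Mapping.lookup p w) \<in> \<rat>}"

definition eval_alg :: "ncpoly \<Rightarrow> 'a::cstar_algebra list \<Rightarrow> 'a" where
  "eval_alg p xs = (\<Sum>w\<in>Poly_Mapping.keys p. scaleC (Poly_Mapping.lookup p w) (foldr (\<lambda>i acc. xs ! i * acc) w 1))"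

definition madj :: "complex mat \<Rightarrow> complex mat" where
  "madj A = transpose_mat (map_mat cnj A)"

definition mtrace :: "complex mat \<Rightarrow> complex" where
  "mtrace A = (\<Sum>i<dim_row A. A $$ (i, i))"

definition vnorm :: "complex vec \<Rightarrow> real" where
  "vnorm v = sqrt (\<Sum>i<dim_vec v. (cmod (v $ i))\<^sup>2)"

definition opnorm :: "nat \<Rightarrow> complex mat \<Rightarrow> real" where
  "opnorm k A = Sup {vnorm (A *\<^sub>v v) | v. v \<in> carrier_vec k \<and> vnorm v \<le> 1}"

definition sa_mats :: "nat \<Rightarrow> complex mat set" where
  "sa_mats k = {A. A \<in> carrier_mat k k \<and> madj A = A}"

definition unitary_mats :: "nat \<Rightarrow> complex mat set" where
  "unitary_mats k = {W. W \<in> carrier_mat k k \<and> W * madj W = 1\<^sub>m k \<and> madj W * W = 1\<^sub>m k}"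

definition eval_mat :: "nat \<Rightarrow> ncpoly \<Rightarrow> complex mat list \<Rightarrow> complex mat" where
  "eval_mat k p As = mat k k (\<lambda>(i, j). \<Sum>w\<in>Poly_Mapping.keys p.
      Poly_Mapping.lookup p w * (foldr (\<lambda>l acc. As ! l * acc) w (1\<^sub>m k)) $$ (i, j))"

definition tau :: "nat \<Rightarrow> complex mat \<Rightarrow> complex" where
  "tau k A = mtrace A / of_nat k"

definition norm2 :: "nat \<Rightarrow> complex mat list \<Rightarrow> real" where
  "norm2 k As = sqrt (\<Sum>i<length As. Re (tau k (madj (As ! i) * As ! i)))"

definition tuple_diff :: "complex mat list \<Rightarrow> complex mat list \<Rightarrow> complex mat list" where
  "tuple_diff As Bs = map2 (\<lambda>A B. A - B) As Bs"

text \<open>Gamma_R^{top}(x : y; k, eps, P_1, ..., P_r), with the enumeration P indexed from 0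
  (P 0 = P_1, ..., P (r-1) = P_r).\<close>
definition Gamma_top :: "'a::cstar_algebra list \<Rightarrow> 'a list \<Rightarrow> (nat \<Rightarrow> ncpoly) \<Rightarrow> real \<Rightarrow>
    nat \<Rightarrow> real \<Rightarrow> nat \<Rightarrow> complex mat list set" where
  "Gamma_top xs ys P R k \<epsilon> r =
    {As. length As = length xs \<and> (\<forall>A\<in>set As. A \<in> sa_mats k) \<and>
      (\<exists>Bs. length Bs = length ys \<and> (\<forall>B\<in>set Bs. B \<in> sa_mats k) \<and>
        (\<forall>C\<in>set (As @ Bs). opnorm k C \<le> R) \<and>
        (\<forall>j<r. \<bar>opnorm k (eval_mat k (P j) (As @ Bs)) - norm (eval_alg (P j) (xs @ ys))\<bar> \<le> \<epsilon>))}"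

definition orbit_ball :: "nat \<Rightarrow> complex mat list \<Rightarrow> real \<Rightarrow> complex mat list set" where
  "orbit_ball k Bs \<omega> = {As. length As = length Bs \<and> (\<forall>A\<in>set As. A \<in> carrier_mat k k) \<and>
      (\<exists>W\<in>unitary_mats k. norm2 k (tuple_diff As (map (\<lambda>B. W * B * madj W) Bs)) < \<omega>)}"

text \<open>o_2(Sigma, omega): minimal number of omega-orbit balls centred in Sigma covering Sigma
  (infinity if there is no finite such cover).\<close>
definition o2 :: "nat \<Rightarrow> complex mat list set \<Rightarrow> real \<Rightarrow> enat" where
  "o2 k \<Sigma> \<omega> = Inf {enat (card C) | C. finite C \<and> C \<subseteq> \<Sigma> \<and> \<Sigma> \<subseteq> (\<Union>B\<in>C. orbit_ball k B \<omega>)}"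

text \<open>Logarithm of a covering number, with log 0 = -infinity (natural logarithm).\<close>
definition log_cov :: "enat \<Rightarrow> ereal" where
  "log_cov N = (if N = \<infinity> then \<infinity> else if N = 0 then -\<infinity> else ereal (ln (real (the_enat N))))"

text \<open>K_top^(2)(x : y; omega) w.r.t. the enumeration P; for m = 0 take ys = [].\<close>
definition Ktop :: "'a::cstar_algebra list \<Rightarrow> 'a list \<Rightarrow> (nat \<Rightarrow> ncpoly) \<Rightarrow> real \<Rightarrow> ereal" where
  "Ktop xs ys P \<omega> =
    (SUP R\<in>{0<..}. INF \<epsilon>\<in>{0<..}. INF r\<in>{1..}.
       limsup (\<lambda>k. log_cov (o2 k (Gamma_top xs ys P R k \<epsilon> r) \<omega>) / ereal ((real k)\<^sup>2)))"

end

theory Submission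
  imports Defs
begin

definition E :: "(complex \<Rightarrow> nat list \<Rightarrow> 'b::comm_monoid_add) \<Rightarrow> ncpoly \<Rightarrow> 'b" where
  "E g p = (\<Sum>w\<in>Poly_Mapping.keys p. g (Poly_Mapping.lookup p w) w)"

lemma E_superset:
  assumes "finite S" "Poly_Mapping.keys p \<subseteq> S" "\<And>w. g 0 w = 0"
  shows "E g p = (\<Sum>w\<in>S. g (Poly_Mapping.lookup p w) w)"
  unfolding E_def
  by (rule sum.mono_neutral_left) (use assms in \<open>auto simp: in_keys_iff\<close>)

lemma E_add:
  assumes "\<And>w. g 0 w = 0" "\<And>a b w. g (a + b) w = g a w + g b w"
  shows "E g (p + q) = E g p + E g q"
proof -
  let ?S = "Poly_Mapping.keys p \<union> Poly_Mapping.keys q"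
  have "E g (p + q) = (\<Sum>w\<in>?S. g (Poly_Mapping.lookup (p+q) w) w)"
    by (rule E_superset) (use assms keys_add[of p q] in auto)
  also have "\<dots> = (\<Sum>w\<in>?S. g (Poly_Mapping.lookup p w) w) + (\<Sum>w\<in>?S. g (Poly_Mapping.lookup q w) w)"
    by (simp add: lookup_add assms sum.distrib)
  also have "\<dots> = E g p + E g q"
    by (subst (1 2) E_superset[where S = ?S]) (use assms in auto)
  finally show ?thesis .
qed

lemma E_zero: "E g 0 = 0"
  by (simp add: E_def)

lemma E_sum:
  assumes "\<And>w. g 0 w = 0" "\<And>a b w. g (a + b) w = g a w + g b w"
  shows "E g (sum f I) = (\<Sum>i\<in>I. E g (f i))"
proof (cases "finite I")
  case True
  then show ?thesis by induction (simp_all add: E_zero E_add[OF assms])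
qed (simp add: E_zero)

lemma E_single:
  assumes "\<And>w. g 0 w = 0"
  shows "E g (Poly_Mapping.single w c) = g c w"
  using assms by (simp add: E_def)

definition pmul :: "ncpoly \<Rightarrow> ncpoly \<Rightarrow> ncpoly" where
  "pmul p q = (\<Sum>(u,v)\<in>Poly_Mapping.keys p \<times> Poly_Mapping.keys q.
      Poly_Mapping.single (u @ v) (Poly_Mapping.lookup p u * Poly_Mapping.lookup q v))"

lemma E_pmul:
  assumes "\<And>w. g 0 w = 0" "\<And>a b w. g (a + b) w = g a w + g b w"
  shows "E g (pmul p q) = (\<Sum>u\<in>Poly_Mapping.keys p. \<Sum>v\<in>Poly_Mapping.keys q.
      g (Poly_Mapping.lookup p u * Poly_Mapping.lookup q v) (u @ v))"
  unfolding pmul_def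
  by (simp add: E_sum[OF assms] E_single[of g, OF assms(1)] sum.cartesian_product case_prod_beta)

lemma E_pmul_const:
  assumes "\<And>w. g 0 w = 0" "\<And>a b w. g (a + b) w = g a w + g b w"
  shows "E g (pmul (Poly_Mapping.single [] c) p) = (\<Sum>v\<in>Poly_Mapping.keys p. g (c * Poly_Mapping.lookup p v) v)"
  by (cases "c = 0") (simp_all add: E_pmul[OF assms] assms(1))

lemma scaleC_zero_left[simp]: "scaleC 0 (a::'a::cstar_algebra) = 0"
  using scaleC_add_left[of 0 0 a] by simp

lemma scaleC_zero_right[simp]: "scaleC c (0::'a::cstar_algebra) = 0"
  using scaleC_add_right[of c 0 0] by simp

lemma scaleC_one[simp]: "scaleC 1 (a::'a::cstar_algebra) = a"
  using scaleC_of_real[of 1 a] by simp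

lemma scaleC_sum_right: "scaleC c (sum f I) = (\<Sum>i\<in>I. scaleC c (f i::'a::cstar_algebra))"
  by (induction I rule: infinite_finite_induct) (simp_all add: scaleC_add_right)

lemma scaleC_minus_right: "scaleC c (a - b) = scaleC c a - scaleC c (b::'a::cstar_algebra)"
  using scaleC_add_right[of c "a - b" b] by (simp add: algebra_simps)

lemma scaleC_minus_left: "scaleC (c - d) a = scaleC c a - scaleC d (a::'a::cstar_algebra)"
  using scaleC_add_left[of "c - d" d a] by (simp add: algebra_simps)

lemma adj_zero[simp]: "adj (0::'a::cstar_algebra) = 0"
  using adj_add[of 0 0] by simp

lemma adj_minus: "adj (a - b) = adj a - adj (b::'a::cstar_algebra)"
  using adj_add[of "a - b" b] by (simp add: algebra_simps)

lemma adj_one[simp]: "adj (1::'a::cstar_algebra) = 1"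
proof -
  have "adj (1::'a) = adj 1 * 1" by simp
  also have "\<dots> = adj 1 * adj (adj 1)" by (simp only: adj_adj)
  also have "\<dots> = adj (adj 1 * 1)" by (simp only: adj_mult)
  also have "\<dots> = 1" by (simp only: mult_1_right adj_adj)
  finally show ?thesis .
qed

lemma adj_sum: "adj (sum f I) = (\<Sum>i\<in>I. adj (f i::'a::cstar_algebra))"
  by (induction I rule: infinite_finite_induct) (simp_all add: adj_add)

lemma norm_adj_le: "norm (a::'a::cstar_algebra) \<le> norm (adj a)"
proof (cases "a = 0")
  case False
  have "(norm a)\<^sup>2 = norm (adj a * a)" by (simp add: cstar_identity)
  also have "\<dots> \<le> norm (adj a) * norm a" by (rule norm_mult_ineq)
  finally have "norm a * norm a \<le> norm (adj a) * norm a" by (simp add: power2_eq_square)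
  then show ?thesis using False by simp
qed simp

lemma norm_adj[simp]: "norm (adj (a::'a::cstar_algebra)) = norm a"
  using norm_adj_le[of a] norm_adj_le[of "adj a"] by (simp add: adj_adj)

lemma adj_scaleR: "adj (scaleR r (a::'a::cstar_algebra)) = scaleR r (adj a)"
  by (metis adj_scaleC complex_cnj_complex_of_real scaleC_of_real)

lemma bounded_linear_adj: "bounded_linear (adj :: 'a::cstar_algebra \<Rightarrow> 'a)"
  by (rule bounded_linear_intro[where K=1]) (simp_all add: adj_add adj_scaleR)

lemma scaleC_scaleR_comm: "scaleC c (scaleR r (a::'a::cstar_algebra)) = scaleR r (scaleC c a)"
  by (metis mult.commute scaleC_of_real scaleC_scaleC)

lemma bounded_linear_scaleC: "bounded_linear (scaleC c :: 'a::cstar_algebra \<Rightarrow> 'a)"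
  by (rule bounded_linear_intro[where K="cmod c"]) (simp_all add: scaleC_add_right scaleC_scaleR_comm norm_scaleC mult.commute)

definition wd :: "'a::cstar_algebra list \<Rightarrow> nat list \<Rightarrow> 'a" where
  "wd xs w = foldr (\<lambda>i acc. xs ! i * acc) w 1"

definition galg :: "'a::cstar_algebra list \<Rightarrow> complex \<Rightarrow> nat list \<Rightarrow> 'a" where
  "galg xs c w = scaleC c (wd xs w)"

lemma galg0: "galg xs 0 w = 0" by (simp add: galg_def)
lemma galg_add: "galg xs (a + b) w = galg xs a w + galg xs b w" by (simp add: galg_def scaleC_add_left)

lemma eval_alg_E: "eval_alg p xs = E (galg xs) p"
  by (simp add: eval_alg_def E_def galg_def wd_def)

lemma wd_Nil[simp]: "wd xs [] = 1" by (simp add: wd_def)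
lemma wd_Cons[simp]: "wd xs (i # w) = xs ! i * wd xs w" by (simp add: wd_def)

lemma wd_append: "wd xs (u @ v) = wd xs u * wd xs v"
  by (induction u) (simp_all add: mult.assoc)

lemma galg_mult: "galg xs (a * b) (u @ v) = galg xs a u * galg xs b v"
proof -
  have "scaleC (a * b) (wd xs u * wd xs v) = scaleC a (scaleC b (wd xs u * wd xs v))"
    by (simp add: scaleC_scaleC)
  also have "\<dots> = scaleC a (wd xs u * scaleC b (wd xs v))"
    by (simp only: scaleC_mult_right)
  also have "\<dots> = scaleC a (wd xs u) * scaleC b (wd xs v)"
    by (simp only: scaleC_mult_left)
  finally show ?thesis by (simp add: galg_def wd_append)
qed

lemma eval_alg_add: "eval_alg (p + q) xs = eval_alg p xs + eval_alg q xs"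
  by (simp add: eval_alg_E E_add galg0 galg_add)

lemma eval_alg_sum: "eval_alg (sum f I) xs = (\<Sum>i\<in>I. eval_alg (f i) xs)"
  by (simp add: eval_alg_E E_sum galg0 galg_add)

lemma eval_alg_single: "eval_alg (Poly_Mapping.single w c) xs = scaleC c (wd xs w)"
  by (simp add: eval_alg_E E_single galg0) (simp add: galg_def)

lemma eval_alg_pmul: "eval_alg (pmul p q) xs = eval_alg p xs * eval_alg q xs"
  unfolding eval_alg_E E_pmul[of "galg xs", OF galg0 galg_add]
  by (simp add: galg_mult E_def sum_product)

lemma eval_alg_pmul_const: "eval_alg (pmul (Poly_Mapping.single [] c) p) xs = scaleC c (eval_alg p xs)"
  unfolding eval_alg_E E_pmul_const[of "galg xs", OF galg0 galg_add]
  by (simp add: E_def scaleC_sum_right galg_def scaleC_scaleC)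

definition ratc :: "complex \<Rightarrow> bool" where "ratc z \<longleftrightarrow> Re z \<in> \<rat> \<and> Im z \<in> \<rat>"

lemma ratc_0[simp]: "ratc 0" and ratc_1[simp]: "ratc 1" by (simp_all add: ratc_def)
lemma ratc_add: "ratc a \<Longrightarrow> ratc b \<Longrightarrow> ratc (a + b)" by (simp add: ratc_def)
lemma ratc_mult: "ratc a \<Longrightarrow> ratc b \<Longrightarrow> ratc (a * b)" by (simp add: ratc_def)
lemma ratc_cnj: "ratc a \<Longrightarrow> ratc (cnj a)" by (simp add: ratc_def)
lemma ratc_half: "ratc (1/2)" by (simp add: ratc_def)
lemma ratc_sum: "(\<And>i. i \<in> I \<Longrightarrow> ratc (f i)) \<Longrightarrow> ratc (sum f I)"
  by (induction I rule: infinite_finite_induct) (simp_all add: ratc_add)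

definition vars_in :: "nat \<Rightarrow> ncpoly \<Rightarrow> bool" where
  "vars_in N p \<longleftrightarrow> (\<forall>w\<in>Poly_Mapping.keys p. set w \<subseteq> {..<N})"

lemma rat_ncpolys_iff: "p \<in> rat_ncpolys N \<longleftrightarrow> vars_in N p \<and> (\<forall>w. ratc (Poly_Mapping.lookup p w))"
proof -
  have "(\<forall>w\<in>Poly_Mapping.keys p. ratc (Poly_Mapping.lookup p w)) \<longleftrightarrow> (\<forall>w. ratc (Poly_Mapping.lookup p w))"
    by (metis in_keys_iff ratc_0)
  then show ?thesis unfolding rat_ncpolys_def vars_in_def ratc_def by blast
qed

lemma rat_sum:
  assumes "\<And>i. i \<in> I \<Longrightarrow> f i \<in> rat_ncpolys N"
  shows "sum f I \<in> rat_ncpolys N"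
proof -
  have "vars_in N (sum f I)"
    unfolding vars_in_def
  proof
    fix w assume "w \<in> Poly_Mapping.keys (sum f I)"
    then obtain i where i: "i \<in> I" "w \<in> Poly_Mapping.keys (f i)" using keys_sum[of f I] by blast
    then have "vars_in N (f i)" using assms[OF i(1)] by (simp add: rat_ncpolys_iff)
    then show "set w \<subseteq> {..<N}" using i(2) by (simp add: vars_in_def)
  qed
  moreover have "ratc (Poly_Mapping.lookup (sum f I) w)" for w
    unfolding lookup_sum by (rule ratc_sum) (use assms in \<open>simp add: rat_ncpolys_iff\<close>)
  ultimately show ?thesis by (simp add: rat_ncpolys_iff)
qed

lemma rat_add: "p \<in> rat_ncpolys N \<Longrightarrow> q \<in> rat_ncpolys N \<Longrightarrow> p + q \<in> rat_ncpolys N"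
  using rat_sum[of "{True, False}" "\<lambda>b. if b then p else q" N] by simp

lemma rat_single: "ratc c \<Longrightarrow> set w \<subseteq> {..<N} \<Longrightarrow> Poly_Mapping.single w c \<in> rat_ncpolys N"
  by (auto simp: rat_ncpolys_iff vars_in_def lookup_single when_def)

lemma rat_pmul: "p \<in> rat_ncpolys N \<Longrightarrow> q \<in> rat_ncpolys N \<Longrightarrow> pmul p q \<in> rat_ncpolys N"
  unfolding pmul_def
  by (rule rat_sum, clarsimp, rule rat_single) (auto simp: rat_ncpolys_iff vars_in_def intro!: ratc_mult)

definition pstar :: "ncpoly \<Rightarrow> ncpoly" where
  "pstar p = (\<Sum>w\<in>Poly_Mapping.keys p. Poly_Mapping.single (rev w) (cnj (Poly_Mapping.lookup p w)))"

lemma rat_pstar: "p \<in> rat_ncpolys N \<Longrightarrow> pstar p \<in> rat_ncpolys N"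
  unfolding pstar_def
  by (rule rat_sum, rule rat_single) (auto simp: rat_ncpolys_iff vars_in_def intro!: ratc_cnj)

lemma adj_wd:
  assumes "\<forall>i\<in>set w. adj (xs ! i) = xs ! i"
  shows "adj (wd xs w) = wd xs (rev w)"
  using assms
proof (induction w)
  case (Cons i w)
  then show ?case by (simp add: adj_mult wd_append)
qed simp

lemma eval_alg_pstar:
  assumes "\<forall>a\<in>set xs. adj a = a" "vars_in (length xs) p"
  shows "eval_alg (pstar p) xs = adj (eval_alg p xs)"
proof -
  have "eval_alg (pstar p) xs = (\<Sum>w\<in>Poly_Mapping.keys p. scaleC (cnj (Poly_Mapping.lookup p w)) (wd xs (rev w)))"
    by (simp add: pstar_def eval_alg_sum eval_alg_single)
  also have "\<dots> = (\<Sum>w\<in>Poly_Mapping.keys p. adj (scaleC (Poly_Mapping.lookup p w) (wd xs w)))"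
  proof (rule sum.cong[OF refl])
    fix w assume "w \<in> Poly_Mapping.keys p"
    then have "set w \<subseteq> {..<length xs}" using assms by (auto simp: vars_in_def)
    then have "\<forall>i\<in>set w. adj (xs ! i) = xs ! i" using assms(1) by (auto intro!: nth_mem)
    then show "scaleC (cnj (Poly_Mapping.lookup p w)) (wd xs (rev w)) = adj (scaleC (Poly_Mapping.lookup p w) (wd xs w))"
      by (simp add: adj_scaleC adj_wd)
  qed
  also have "\<dots> = adj (eval_alg p xs)" by (simp add: eval_alg_def adj_sum wd_def)
  finally show ?thesis .
qed

lemma mat_eqI_k:
  assumes "A \<in> carrier_mat k k" "B \<in> carrier_mat k k" "\<And>i j. i < k \<Longrightarrow> j < k \<Longrightarrow> A $$ (i,j) = B $$ (i,j)"
  shows "A = B"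
  using assms by (intro eq_matI) auto

lemma mult_index_k:
  assumes "A \<in> carrier_mat k k" "B \<in> carrier_mat k k" "i < k" "j < k"
  shows "(A * B) $$ (i,j) = (\<Sum>t<k. A $$ (i,t) * B $$ (t,j))"
  using assms by (simp add: scalar_prod_def atLeast0LessThan)

definition Mw :: "nat \<Rightarrow> complex mat list \<Rightarrow> nat list \<Rightarrow> complex mat" where
  "Mw k As w = foldr (\<lambda>l acc. As ! l * acc) w (1\<^sub>m k)"

lemma Mw_Nil[simp]: "Mw k As [] = 1\<^sub>m k" by (simp add: Mw_def)
lemma Mw_Cons[simp]: "Mw k As (l # w) = As ! l * Mw k As w" by (simp add: Mw_def)

definition cw :: "nat \<Rightarrow> complex mat list \<Rightarrow> nat list \<Rightarrow> bool" where
  "cw k As w \<longleftrightarrow> (\<forall>l\<in>set w. As ! l \<in> carrier_mat k k)"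

lemma Mw_carrier: "cw k As w \<Longrightarrow> Mw k As w \<in> carrier_mat k k"
  by (induction w) (auto simp: cw_def)

lemma Mw_append: "cw k As u \<Longrightarrow> cw k As v \<Longrightarrow> Mw k As (u @ v) = Mw k As u * Mw k As v"
proof (induction u)
  case Nil
  then show ?case using Mw_carrier[of k As v] by simp
next
  case (Cons l u)
  then have "As ! l \<in> carrier_mat k k" "cw k As u" by (auto simp: cw_def)
  then show ?case using Cons Mw_carrier[of k As u] Mw_carrier[of k As v] by simp
qed

definition gmat :: "nat \<Rightarrow> complex mat list \<Rightarrow> nat \<Rightarrow> nat \<Rightarrow> complex \<Rightarrow> nat list \<Rightarrow> complex" where
  "gmat k As i j c w = c * Mw k As w $$ (i,j)"

lemma gmat0: "gmat k As i j 0 w = 0" by (simp add: gmat_def)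
lemma gmat_add: "gmat k As i j (a + b) w = gmat k As i j a w + gmat k As i j b w"
  by (simp add: gmat_def algebra_simps)

lemma eval_mat_carrier[simp]: "eval_mat k p As \<in> carrier_mat k k"
  by (simp add: eval_mat_def)

lemma dim_eval_mat[simp]: "dim_row (eval_mat k p As) = k" "dim_col (eval_mat k p As) = k"
  by (simp_all add: eval_mat_def)

lemma eval_mat_index: "i < k \<Longrightarrow> j < k \<Longrightarrow> eval_mat k p As $$ (i,j) = E (gmat k As i j) p"
  by (simp add: eval_mat_def E_def gmat_def Mw_def)

definition cp :: "nat \<Rightarrow> complex mat list \<Rightarrow> ncpoly \<Rightarrow> bool" where
  "cp k As p \<longleftrightarrow> (\<forall>w\<in>Poly_Mapping.keys p. cw k As w)"

lemma eval_mat_pmul: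
  assumes "cp k As p" "cp k As q"
  shows "eval_mat k (pmul p q) As = eval_mat k p As * eval_mat k q As"
proof (rule mat_eqI_k)
  show "eval_mat k p As * eval_mat k q As \<in> carrier_mat k k" by (metis eval_mat_carrier mult_carrier_mat)
  fix i j assume ij: "i < k" "j < k"
  let ?P = "Poly_Mapping.keys p" and ?Q = "Poly_Mapping.keys q"
  let ?lp = "Poly_Mapping.lookup p" and ?lq = "Poly_Mapping.lookup q"
  have "eval_mat k (pmul p q) As $$ (i,j) = (\<Sum>u\<in>?P. \<Sum>v\<in>?Q. (?lp u * ?lq v) * Mw k As (u @ v) $$ (i,j))"
    using ij by (simp add: eval_mat_index E_pmul[of "gmat k As i j", OF gmat0 gmat_add]) (simp add: gmat_def)
  also have "\<dots> = (\<Sum>u\<in>?P. \<Sum>v\<in>?Q. \<Sum>t<k. (?lp u * Mw k As u $$ (i,t)) * (?lq v * Mw k As v $$ (t,j)))"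
  proof (intro sum.cong refl)
    fix u v assume uv: "u \<in> ?P" "v \<in> ?Q"
    then have c: "cw k As u" "cw k As v" using assms by (auto simp: cp_def)
    show "(?lp u * ?lq v) * Mw k As (u @ v) $$ (i,j) = (\<Sum>t<k. (?lp u * Mw k As u $$ (i,t)) * (?lq v * Mw k As v $$ (t,j)))"
      using ij by (simp add: Mw_append[OF c] mult_index_k[OF Mw_carrier[OF c(1)] Mw_carrier[OF c(2)]]
          sum_distrib_left mult_ac)
  qed
  also have "\<dots> = (\<Sum>t<k. \<Sum>u\<in>?P. \<Sum>v\<in>?Q. (?lp u * Mw k As u $$ (i,t)) * (?lq v * Mw k As v $$ (t,j)))"
    by (subst sum.swap) (simp add: sum.swap[of _ ?Q])
  also have "\<dots> = (\<Sum>t<k. eval_mat k p As $$ (i,t) * eval_mat k q As $$ (t,j))"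
    using ij by (simp add: eval_mat_index E_def gmat_def sum_product)
  also have "\<dots> = (eval_mat k p As * eval_mat k q As) $$ (i,j)"
    using mult_index_k[OF eval_mat_carrier eval_mat_carrier ij] by simp
  finally show "eval_mat k (pmul p q) As $$ (i,j) = (eval_mat k p As * eval_mat k q As) $$ (i,j)" .
qed simp

lemma eval_mat_add: "eval_mat k (p + q) As = eval_mat k p As + eval_mat k q As"
proof (rule mat_eqI_k[where k=k])
  fix i j assume ij: "i < k" "j < k"
  have "(eval_mat k p As + eval_mat k q As) $$ (i,j) = eval_mat k p As $$ (i,j) + eval_mat k q As $$ (i,j)"
    using ij by simp
  then show "eval_mat k (p + q) As $$ (i,j) = (eval_mat k p As + eval_mat k q As) $$ (i,j)"
    using ij by (simp add: eval_mat_index E_add[of "gmat k As i j", OF gmat0 gmat_add])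
qed simp_all

lemma eval_mat_single_index: "i < k \<Longrightarrow> j < k \<Longrightarrow> eval_mat k (Poly_Mapping.single w c) As $$ (i,j) = c * Mw k As w $$ (i,j)"
  by (simp add: eval_mat_index E_single[of "gmat k As i j", OF gmat0]) (simp add: gmat_def)

lemma eval_mat_sum_index: "i < k \<Longrightarrow> j < k \<Longrightarrow> eval_mat k (sum f I) As $$ (i,j) = (\<Sum>x\<in>I. eval_mat k (f x) As $$ (i,j))"
  by (simp add: eval_mat_index E_sum[of "gmat k As i j", OF gmat0 gmat_add])

lemma eval_mat_pmul_const_index: "i < k \<Longrightarrow> j < k \<Longrightarrow>
   eval_mat k (pmul (Poly_Mapping.single [] c) p) As $$ (i,j) = c * eval_mat k p As $$ (i,j)"
  by (simp add: eval_mat_index E_pmul_const[of "gmat k As i j", OF gmat0 gmat_add])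
     (simp add: E_def gmat_def sum_distrib_left mult_ac)

lemma madj_carrier[simp]: "A \<in> carrier_mat k k \<Longrightarrow> madj A \<in> carrier_mat k k"
  by (simp add: madj_def)

lemma dim_madj[simp]: "dim_row (madj A) = dim_col A" "dim_col (madj A) = dim_row A"
  by (simp_all add: madj_def)

lemma madj_index: "i < dim_col A \<Longrightarrow> j < dim_row A \<Longrightarrow> madj A $$ (i,j) = cnj (A $$ (j,i))"
  by (simp add: madj_def)

lemma madj_index_k: "A \<in> carrier_mat k k \<Longrightarrow> i < k \<Longrightarrow> j < k \<Longrightarrow> madj A $$ (i,j) = cnj (A $$ (j,i))"
  by (simp add: madj_index)

lemma madj_mult:
  assumes "A \<in> carrier_mat k k" "B \<in> carrier_mat k k"
  shows "madj (A * B) = madj B * madj A"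
proof (rule mat_eqI_k)
  have AB: "A * B \<in> carrier_mat k k" using assms by (metis mult_carrier_mat)
  show "madj (A * B) \<in> carrier_mat k k" using AB by simp
  show "madj B * madj A \<in> carrier_mat k k" using assms by (metis madj_carrier mult_carrier_mat)
  fix i j assume ij: "i < k" "j < k"
  have "madj (A * B) $$ (i,j) = cnj ((A * B) $$ (j,i))"
    using madj_index_k[OF AB ij] .
  also have "\<dots> = (\<Sum>t<k. cnj (B $$ (t,i)) * cnj (A $$ (j,t)))"
    using mult_index_k[OF assms(1,2) ij(2) ij(1)] by (simp add: mult.commute)
  also have "\<dots> = (\<Sum>t<k. madj B $$ (i,t) * madj A $$ (t,j))"
    using assms ij by (intro sum.cong refl) (simp add: madj_index)
  also have "\<dots> = (madj B * madj A) $$ (i,j)"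
    using mult_index_k[OF madj_carrier[OF assms(2)] madj_carrier[OF assms(1)] ij] by simp
  finally show "madj (A * B) $$ (i,j) = (madj B * madj A) $$ (i,j)" .
qed

lemma madj_one[simp]: "madj (1\<^sub>m k) = 1\<^sub>m k"
  by (rule mat_eqI_k[where k=k]) (auto simp: madj_index)

lemma madj_madj: "A \<in> carrier_mat k k \<Longrightarrow> madj (madj A) = A"
  by (rule mat_eqI_k[where k=k]) (auto simp: madj_index)

lemma Mw_madj:
  assumes "\<forall>l\<in>set w. As ! l \<in> sa_mats k"
  shows "madj (Mw k As w) = Mw k As (rev w)"
  using assms
proof (induction w)
  case (Cons l w)
  have c: "cw k As w" "cw k As [l]" using Cons.prems by (auto simp: cw_def sa_mats_def)
  have Al: "As ! l \<in> carrier_mat k k" using Cons.prems by (simp add: sa_mats_def)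
  have "madj (Mw k As (l # w)) = madj (Mw k As w) * madj (As ! l)"
    using madj_mult[OF Al Mw_carrier[OF c(1)]] by simp
  also have "\<dots> = Mw k As (rev w) * Mw k As [l]"
    using Cons Al by (simp add: sa_mats_def)
  also have "\<dots> = Mw k As (rev w @ [l])"
    using c by (simp add: Mw_append cw_def)
  finally show ?case by simp
qed simp

lemma eval_mat_pstar:
  assumes "\<forall>w\<in>Poly_Mapping.keys p. \<forall>l\<in>set w. As ! l \<in> sa_mats k"
  shows "madj (eval_mat k p As) = eval_mat k (pstar p) As"
proof (rule mat_eqI_k)
  fix i j assume ij: "i < k" "j < k"
  have "madj (eval_mat k p As) $$ (i,j) = (\<Sum>w\<in>Poly_Mapping.keys p. cnj (Poly_Mapping.lookup p w) * cnj (Mw k As w $$ (j,i)))"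
    using ij by (simp add: madj_index eval_mat_index E_def gmat_def cnj_sum)
  also have "\<dots> = (\<Sum>w\<in>Poly_Mapping.keys p. cnj (Poly_Mapping.lookup p w) * Mw k As (rev w) $$ (i,j))"
  proof (rule sum.cong[OF refl])
    fix w assume "w \<in> Poly_Mapping.keys p"
    then have sa: "\<forall>l\<in>set w. As ! l \<in> sa_mats k" using assms by auto
    then have "cw k As w" by (auto simp: cw_def sa_mats_def)
    then have "madj (Mw k As w) $$ (i,j) = cnj (Mw k As w $$ (j,i))"
      using madj_index_k[OF Mw_carrier ij] by blast
    then show "cnj (Poly_Mapping.lookup p w) * cnj (Mw k As w $$ (j,i)) = cnj (Poly_Mapping.lookup p w) * Mw k As (rev w) $$ (i,j)"
      using Mw_madj[OF sa] by simp
  qed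
  also have "\<dots> = eval_mat k (pstar p) As $$ (i,j)"
    using ij by (simp add: pstar_def eval_mat_sum_index eval_mat_single_index)
  finally show "madj (eval_mat k p As) $$ (i,j) = eval_mat k (pstar p) As $$ (i,j)" .
qed simp_all

lemma wd_append_restrict: "set w \<subseteq> {..<length xs} \<Longrightarrow> wd (xs @ ys) w = wd xs w"
  by (induction w) (auto simp: nth_append)

lemma Mw_append_restrict: "set w \<subseteq> {..<length As} \<Longrightarrow> Mw k (As @ Bs) w = Mw k As w"
  by (induction w) (auto simp: nth_append)

lemma eval_alg_restrict:
  assumes "vars_in (length xs) p"
  shows "eval_alg p (xs @ ys) = eval_alg p xs"
  unfolding eval_alg_E E_def galg_def
proof (rule sum.cong[OF refl])
  fix w assume "w \<in> Poly_Mapping.keys p"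
  then have "set w \<subseteq> {..<length xs}" using assms by (auto simp: vars_in_def)
  then show "scaleC (Poly_Mapping.lookup p w) (wd (xs @ ys) w) = scaleC (Poly_Mapping.lookup p w) (wd xs w)"
    by (simp add: wd_append_restrict)
qed

lemma eval_mat_restrict:
  assumes "vars_in (length As) p"
  shows "eval_mat k p (As @ Bs) = eval_mat k p As"
  by (rule mat_eqI_k) (use assms Mw_append_restrict in \<open>auto simp: eval_mat_index E_def gmat_def vars_in_def intro!: sum.cong\<close>)

definition letter :: "nat \<Rightarrow> ncpoly list \<Rightarrow> nat \<Rightarrow> ncpoly" where
  "letter N ps l = (if l < N then Poly_Mapping.single [l] 1 else ps ! (l - N))"

definition T :: "nat \<Rightarrow> ncpoly list \<Rightarrow> nat list \<Rightarrow> ncpoly" where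
  "T N ps w = foldr (\<lambda>l acc. pmul (letter N ps l) acc) w (Poly_Mapping.single [] 1)"

definition sub :: "nat \<Rightarrow> ncpoly \<Rightarrow> ncpoly list \<Rightarrow> ncpoly" where
  "sub N Q ps = (\<Sum>w\<in>Poly_Mapping.keys Q. pmul (Poly_Mapping.single [] (Poly_Mapping.lookup Q w)) (T N ps w))"

lemma T_Nil[simp]: "T N ps [] = Poly_Mapping.single [] 1" by (simp add: T_def)
lemma T_Cons[simp]: "T N ps (l # w) = pmul (letter N ps l) (T N ps w)" by (simp add: T_def)

lemma rat_T:
  assumes "\<forall>p\<in>set ps. p \<in> rat_ncpolys N" "set w \<subseteq> {..<N + length ps}"
  shows "T N ps w \<in> rat_ncpolys N"
  using assms(2)
proof (induction w)
  case Nil then show ?case by (simp add: rat_single)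
next
  case (Cons l w)
  have "letter N ps l \<in> rat_ncpolys N"
    using Cons.prems assms(1) by (auto simp: letter_def intro!: rat_single)
  then show ?case using Cons by (simp add: rat_pmul)
qed

lemma rat_sub:
  assumes "\<forall>p\<in>set ps. p \<in> rat_ncpolys N" "Q \<in> rat_ncpolys (N + length ps)"
  shows "sub N Q ps \<in> rat_ncpolys N"
  unfolding sub_def
proof (rule rat_sum)
  fix w assume w: "w \<in> Poly_Mapping.keys Q"
  then have "set w \<subseteq> {..<N + length ps}" using assms(2) by (auto simp: rat_ncpolys_iff vars_in_def)
  then show "pmul (Poly_Mapping.single [] (Poly_Mapping.lookup Q w)) (T N ps w) \<in> rat_ncpolys N"
    using assms by (intro rat_pmul rat_single rat_T) (auto simp: rat_ncpolys_iff)
qed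

lemma eval_alg_T:
  assumes "length xs = N" "set w \<subseteq> {..<N + length ps}"
  shows "eval_alg (T N ps w) xs = wd (xs @ map (\<lambda>p. eval_alg p xs) ps) w"
  using assms(2)
proof (induction w)
  case Nil then show ?case by (simp add: eval_alg_single)
next
  case (Cons l w)
  have "eval_alg (letter N ps l) xs = (xs @ map (\<lambda>p. eval_alg p xs) ps) ! l"
    using Cons.prems assms(1) by (auto simp: letter_def eval_alg_single nth_append)
  then show ?case using Cons by (simp add: eval_alg_pmul)
qed

lemma eval_alg_sub:
  assumes "length xs = N" "Q \<in> rat_ncpolys (N + length ps)"
  shows "eval_alg (sub N Q ps) xs = eval_alg Q (xs @ map (\<lambda>p. eval_alg p xs) ps)"
proof -
  have "eval_alg (sub N Q ps) xs = (\<Sum>w\<in>Poly_Mapping.keys Q. scaleC (Poly_Mapping.lookup Q w) (eval_alg (T N ps w) xs))"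
    by (simp add: sub_def eval_alg_sum eval_alg_pmul_const)
  also have "\<dots> = (\<Sum>w\<in>Poly_Mapping.keys Q. scaleC (Poly_Mapping.lookup Q w) (wd (xs @ map (\<lambda>p. eval_alg p xs) ps) w))"
    using assms by (intro sum.cong refl) (auto simp: eval_alg_T rat_ncpolys_iff vars_in_def)
  also have "\<dots> = eval_alg Q (xs @ map (\<lambda>p. eval_alg p xs) ps)"
    by (simp add: eval_alg_def wd_def)
  finally show ?thesis .
qed

lemma cp_vars: "vars_in (length As) p \<Longrightarrow> \<forall>A\<in>set As. A \<in> carrier_mat k k \<Longrightarrow> cp k As p"
  unfolding cp_def cw_def vars_in_def by (meson lessThan_iff nth_mem subsetD)

lemma eval_mat_T:
  assumes "length As = N" "\<forall>A\<in>set As. A \<in> carrier_mat k k" "\<forall>p\<in>set ps. p \<in> rat_ncpolys N"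
    "set w \<subseteq> {..<N + length ps}"
  shows "eval_mat k (T N ps w) As = Mw k (As @ map (\<lambda>p. eval_mat k p As) ps) w"
  using assms(4)
proof (induction w)
  case Nil then show ?case
    by (intro mat_eqI_k) (auto simp: eval_mat_single_index)
next
  case (Cons l w)
  have l: "l < N + length ps" using Cons.prems by auto
  have rl: "letter N ps l \<in> rat_ncpolys N"
    using l assms(3) by (auto simp: letter_def intro!: rat_single)
  have rT: "T N ps w \<in> rat_ncpolys N" using Cons.prems assms(3) by (auto intro!: rat_T)
  have "eval_mat k (letter N ps l) As = (As @ map (\<lambda>p. eval_mat k p As) ps) ! l"
  proof (cases "l < N")
    case True
    then have "As ! l \<in> carrier_mat k k" using assms(1,2) by auto
    then show ?thesis using True assms(1)
      by (intro mat_eqI_k) (auto simp: letter_def eval_mat_single_index nth_append)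
  qed (use assms(1) l in \<open>auto simp: letter_def nth_append\<close>)
  moreover have "eval_mat k (T N ps (l # w)) As = eval_mat k (letter N ps l) As * eval_mat k (T N ps w) As"
    using rl rT assms(1,2) by (simp add: eval_mat_pmul cp_vars rat_ncpolys_iff)
  ultimately show ?case using Cons by simp
qed

lemma eval_mat_sub:
  assumes "length As = N" "\<forall>A\<in>set As. A \<in> carrier_mat k k" "\<forall>p\<in>set ps. p \<in> rat_ncpolys N"
    "Q \<in> rat_ncpolys (N + length ps)"
  shows "eval_mat k (sub N Q ps) As = eval_mat k Q (As @ map (\<lambda>p. eval_mat k p As) ps)"
proof (rule mat_eqI_k)
  fix i j assume ij: "i < k" "j < k"
  have "eval_mat k (sub N Q ps) As $$ (i,j) = (\<Sum>w\<in>Poly_Mapping.keys Q. Poly_Mapping.lookup Q w * eval_mat k (T N ps w) As $$ (i,j))"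
    using ij by (simp add: sub_def eval_mat_sum_index eval_mat_pmul_const_index)
  also have "\<dots> = (\<Sum>w\<in>Poly_Mapping.keys Q. Poly_Mapping.lookup Q w * Mw k (As @ map (\<lambda>p. eval_mat k p As) ps) w $$ (i,j))"
    using assms by (intro sum.cong refl) (auto simp: eval_mat_T rat_ncpolys_iff vars_in_def)
  also have "\<dots> = eval_mat k Q (As @ map (\<lambda>p. eval_mat k p As) ps) $$ (i,j)"
    using ij by (simp add: eval_mat_index E_def gmat_def)
  finally show "eval_mat k (sub N Q ps) As $$ (i,j) = eval_mat k Q (As @ map (\<lambda>p. eval_mat k p As) ps) $$ (i,j)" .
qed simp_all

section \<open>Density of polynomials\<close>

lemma closure_binop:
  fixes f :: "'a::real_normed_vector \<Rightarrow> 'a \<Rightarrow> 'a"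
  assumes "\<And>a b. a \<in> S \<Longrightarrow> b \<in> S \<Longrightarrow> f a b \<in> S"
    and "continuous_on UNIV (\<lambda>z. f (fst z) (snd z))"
    and "a \<in> closure S" "b \<in> closure S"
  shows "f a b \<in> closure S"
proof -
  have sub: "(\<lambda>z. f (fst z) (snd z)) ` closure (S \<times> S) \<subseteq> closure S"
    by (rule image_closure_subset) (use continuous_on_subset[OF assms(2) subset_UNIV] assms(1) in \<open>auto intro: closure_subset[THEN subsetD]\<close>)
  have "(a, b) \<in> closure (S \<times> S)" using assms(3,4) by (simp add: closure_Times)
  from subsetD[OF sub imageI[OF this]] show ?thesis by simp
qed

lemma closure_unop:
  fixes f :: "'a::real_normed_vector \<Rightarrow> 'a"
  assumes "\<And>a. a \<in> S \<Longrightarrow> f a \<in> S" "continuous_on UNIV f" "a \<in> closure S"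
  shows "f a \<in> closure S"
proof -
  have "f ` closure S \<subseteq> closure S"
    by (rule image_closure_subset) (use continuous_on_subset[OF assms(2) subset_UNIV] assms(1) in \<open>auto intro: closure_subset[THEN subsetD]\<close>)
  then show ?thesis using assms(3) by auto
qed

definition Dset :: "'a::cstar_algebra list \<Rightarrow> 'a set" where
  "Dset xs = {eval_alg p xs | p. p \<in> rat_ncpolys (length xs)}"

lemma Dset_I: "p \<in> rat_ncpolys (length xs) \<Longrightarrow> eval_alg p xs = a \<Longrightarrow> a \<in> Dset xs"
  unfolding Dset_def by blast

lemma complex_rat_approx:
  assumes "e > 0"
  obtains q where "ratc q" "cmod (q - c) < e"
proof -
  obtain r1 where r1: "r1 \<in> \<rat>" "\<bar>r1 - Re c\<bar> < e/2" using rational_approximation[of "e/2"] assms by auto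
  obtain r2 where r2: "r2 \<in> \<rat>" "\<bar>r2 - Im c\<bar> < e/2" using rational_approximation[of "e/2"] assms by auto
  have "cmod (Complex r1 r2 - c) \<le> \<bar>r1 - Re c\<bar> + \<bar>r2 - Im c\<bar>"
    using cmod_le[of "Complex r1 r2 - c"] by simp
  also have "\<dots> < e" using r1 r2 by simp
  finally show ?thesis using that[of "Complex r1 r2"] r1 r2 by (simp add: ratc_def)
qed

lemma generated_in_closure:
  assumes sa: "\<forall>a\<in>set xs. adj a = a"
  shows "cstar_generated (set xs) \<subseteq> closure (Dset xs)"
proof -
  let ?D = "Dset xs" and ?n = "length xs"
  have addD: "a + b \<in> ?D" if ab: "a \<in> ?D" "b \<in> ?D" for a b
  proof -
    obtain p where p: "p \<in> rat_ncpolys ?n" "a = eval_alg p xs" using ab(1) unfolding Dset_def by blast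
    obtain q where q: "q \<in> rat_ncpolys ?n" "b = eval_alg q xs" using ab(2) unfolding Dset_def by blast
    have "a + b = eval_alg (p + q) xs" using p q by (simp add: eval_alg_add)
    moreover have "p + q \<in> rat_ncpolys ?n" using p q by (simp add: rat_add)
    ultimately show ?thesis unfolding Dset_def by blast
  qed
  have mulD: "a * b \<in> ?D" if ab: "a \<in> ?D" "b \<in> ?D" for a b
  proof -
    obtain p where p: "p \<in> rat_ncpolys ?n" "a = eval_alg p xs" using ab(1) unfolding Dset_def by blast
    obtain q where q: "q \<in> rat_ncpolys ?n" "b = eval_alg q xs" using ab(2) unfolding Dset_def by blast
    have "a * b = eval_alg (pmul p q) xs" using p q by (simp add: eval_alg_pmul)
    moreover have "pmul p q \<in> rat_ncpolys ?n" using p q by (simp add: rat_pmul)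
    ultimately show ?thesis unfolding Dset_def by blast
  qed
  have adjD: "adj a \<in> ?D" if aD: "a \<in> ?D" for a
  proof -
    obtain p where p: "p \<in> rat_ncpolys ?n" "a = eval_alg p xs" using aD unfolding Dset_def by blast
    then have "adj a = eval_alg (pstar p) xs" using sa by (simp add: eval_alg_pstar rat_ncpolys_iff)
    then show ?thesis using rat_pstar[OF p(1)] unfolding Dset_def by blast
  qed
  have constD: "scaleC q 1 \<in> ?D" if "ratc q" for q
  proof -
    have "Poly_Mapping.single [] q \<in> rat_ncpolys ?n" using that by (simp add: rat_single)
    moreover have "eval_alg (Poly_Mapping.single [] q) xs = scaleC q 1" by (simp add: eval_alg_single)
    ultimately show ?thesis by (rule Dset_I)
  qed
  have xD: "a \<in> ?D" if ax: "a \<in> set xs" for a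
  proof -
    obtain i where i: "i < ?n" "a = xs ! i" using ax in_set_conv_nth[of a xs] by auto
    have "Poly_Mapping.single [i] 1 \<in> rat_ncpolys ?n" using i by (simp add: rat_single)
    moreover have "eval_alg (Poly_Mapping.single [i] 1) xs = a" using i by (simp add: eval_alg_single)
    ultimately show ?thesis by (rule Dset_I)
  qed
  have cont_add: "continuous_on UNIV (\<lambda>z::'a\<times>'a. fst z + snd z)"
    by (intro continuous_on_add continuous_on_fst continuous_on_snd continuous_on_id)
  have cont_mul: "continuous_on UNIV (\<lambda>z::'a\<times>'a. fst z * snd z)"
    by (intro continuous_on_mult continuous_on_fst continuous_on_snd continuous_on_id)
  have cont_adj: "continuous_on UNIV (adj :: 'a \<Rightarrow> 'a)"
    by (rule linear_continuous_on[OF bounded_linear_adj])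
  have scal1: "scaleC c 1 \<in> closure ?D" for c
    unfolding closure_approachable
  proof (intro allI impI)
    fix e :: real assume "e > 0"
    then obtain q where q: "ratc q" "cmod (q - c) < e" by (rule complex_rat_approx)
    have "dist (scaleC q (1::'a)) (scaleC c 1) = cmod (q - c)"
      by (simp add: dist_norm scaleC_minus_left[symmetric] norm_scaleC)
    then show "\<exists>y\<in>?D. dist y (scaleC c 1) < e" using q constD[OF q(1)] by (intro bexI[of _ "scaleC q 1"]) simp_all
  qed
  have "cstar_subalgebra (closure ?D)"
    unfolding cstar_subalgebra_def
  proof (intro conjI ballI allI)
    show "closed (closure ?D)" by simp
    show "1 \<in> closure ?D" using scal1[of 1] by simp
    fix a b assume a: "a \<in> closure ?D" and b: "b \<in> closure ?D"
    show "a + b \<in> closure ?D" by (rule closure_binop[OF addD cont_add a b])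
    show "a * b \<in> closure ?D" by (rule closure_binop[OF mulD cont_mul a b])
  next
    fix a assume a: "a \<in> closure ?D"
    show "adj a \<in> closure ?D" by (rule closure_unop[OF adjD cont_adj a])
  next
    fix c a assume a: "a \<in> closure ?D"
    have "scaleC c a = scaleC c 1 * a" using scaleC_mult_left[of c 1 a] by simp
    then show "scaleC c a \<in> closure ?D" using closure_binop[OF mulD cont_mul scal1 a] by simp
  qed
  moreover have "set xs \<subseteq> closure ?D" using xD closure_subset by blast
  ultimately show ?thesis unfolding cstar_generated_def by blast
qed

lemma tendsto_wd:
  assumes "\<forall>i\<in>set w. ((\<lambda>k. zs k ! i) \<longlongrightarrow> ys ! i) F"
  shows "((\<lambda>k. wd (zs k) w) \<longlongrightarrow> wd ys w) F"
  using assms by (induction w) (auto intro!: tendsto_mult)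

lemma tendsto_eval_alg:
  assumes "\<forall>w\<in>Poly_Mapping.keys Q. \<forall>i\<in>set w. ((\<lambda>k. zs k ! i) \<longlongrightarrow> ys ! i) F"
  shows "((\<lambda>k. eval_alg Q (zs k)) \<longlongrightarrow> eval_alg Q ys) F"
proof -
  have "((\<lambda>k. \<Sum>w\<in>Poly_Mapping.keys Q. scaleC (Poly_Mapping.lookup Q w) (wd (zs k) w))
        \<longlongrightarrow> (\<Sum>w\<in>Poly_Mapping.keys Q. scaleC (Poly_Mapping.lookup Q w) (wd ys w))) F"
    by (intro tendsto_sum bounded_linear.tendsto[OF bounded_linear_scaleC] tendsto_wd) (use assms in auto)
  then show ?thesis by (simp add: eval_alg_def wd_def)
qed

definition psym :: "ncpoly \<Rightarrow> ncpoly" where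
  "psym p = pmul (Poly_Mapping.single [] (1/2)) (p + pstar p)"

lemma rat_psym: "p \<in> rat_ncpolys N \<Longrightarrow> psym p \<in> rat_ncpolys N"
  unfolding psym_def by (intro rat_pmul rat_single rat_add rat_pstar) (simp_all add: ratc_half)

lemma eval_alg_psym:
  assumes "\<forall>a\<in>set xs. adj a = a" "vars_in (length xs) p"
  shows "eval_alg (psym p) xs = scaleC (1/2) (eval_alg p xs + adj (eval_alg p xs))"
  using assms by (simp add: psym_def eval_alg_pmul_const eval_alg_add eval_alg_pstar)

lemma eval_mat_psym_sa:
  assumes "p \<in> rat_ncpolys (length As)" "\<forall>A\<in>set As. A \<in> sa_mats k"
  shows "eval_mat k (psym p) As \<in> sa_mats k"
proof -
  have letters: "\<forall>w\<in>Poly_Mapping.keys p. \<forall>l\<in>set w. As ! l \<in> sa_mats k"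
    using assms unfolding rat_ncpolys_iff vars_in_def by (meson lessThan_iff nth_mem subsetD)
  let ?P = "eval_mat k p As"
  have idx: "eval_mat k (psym p) As $$ (i,j) = 1/2 * (?P $$ (i,j) + cnj (?P $$ (j,i)))" if "i < k" "j < k" for i j
  proof -
    have "eval_mat k (psym p) As $$ (i,j) = 1/2 * (?P $$ (i,j) + eval_mat k (pstar p) As $$ (i,j))"
      using that by (simp add: psym_def eval_mat_pmul_const_index eval_mat_add)
    also have "eval_mat k (pstar p) As $$ (i,j) = madj ?P $$ (i,j)"
      using eval_mat_pstar[OF letters] by simp
    also have "\<dots> = cnj (?P $$ (j,i))" using madj_index_k[OF eval_mat_carrier that] .
    finally show ?thesis .
  qed
  have "madj (eval_mat k (psym p) As) = eval_mat k (psym p) As"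
  proof (rule mat_eqI_k[where k=k])
    fix i j assume ij: "i < k" "j < k"
    have "madj (eval_mat k (psym p) As) $$ (i,j) = cnj (eval_mat k (psym p) As $$ (j,i))"
      using madj_index_k[OF eval_mat_carrier ij] .
    also have "\<dots> = eval_mat k (psym p) As $$ (i,j)"
      using ij by (simp add: idx algebra_simps)
    finally show "madj (eval_mat k (psym p) As) $$ (i,j) = eval_mat k (psym p) As $$ (i,j)" .
  qed simp_all
  then show ?thesis by (simp add: sa_mats_def)
qed

lemma sa_approx:
  assumes sa: "\<forall>a\<in>set xs. adj a = a" and yc: "y0 \<in> closure (Dset xs)" and ysa: "adj y0 = y0" and e: "e > 0"
  obtains p where "p \<in> rat_ncpolys (length xs)" "norm (eval_alg p xs - y0) < e"
    "\<And>k As. length As = length xs \<Longrightarrow> \<forall>A\<in>set As. A \<in> sa_mats k \<Longrightarrow> eval_mat k p As \<in> sa_mats k"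
proof -
  obtain d where d: "d \<in> Dset xs" "dist d y0 < e" using yc e unfolding closure_approachable by blast
  obtain p where p: "p \<in> rat_ncpolys (length xs)" "d = eval_alg p xs" using d(1) unfolding Dset_def by blast
  have "eval_alg (psym p) xs - y0 = scaleC (1/2) ((d - y0) + adj (d - y0))"
  proof -
    have "y0 = scaleC (1/2) (y0 + adj y0)"
      using ysa scaleC_add_left[of "1/2" "1/2" y0] by (simp add: scaleC_add_right)
    then have "eval_alg (psym p) xs - y0 = scaleC (1/2) (d + adj d) - scaleC (1/2) (y0 + adj y0)"
      using p sa by (simp add: eval_alg_psym rat_ncpolys_iff)
    then show ?thesis by (simp add: scaleC_minus_right[symmetric] adj_minus algebra_simps)
  qed
  then have "norm (eval_alg (psym p) xs - y0) \<le> 1/2 * (norm (d - y0) + norm (adj (d - y0)))"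
    using norm_triangle_ineq[of "d - y0" "adj (d - y0)"] by (simp add: norm_scaleC)
  also have "\<dots> = norm (d - y0)" by simp
  also have "\<dots> < e" using d(2) by (simp add: dist_norm)
  finally show ?thesis
    using that[of "psym p"] rat_psym[OF p(1)] eval_mat_psym_sa[of p] p(1) by auto
qed

lemma mult_k: "A \<in> carrier_mat k k \<Longrightarrow> B \<in> carrier_mat k k \<Longrightarrow> A * B \<in> carrier_mat k k"
  by (metis mult_carrier_mat)

lemma assoc_k: "A \<in> carrier_mat k k \<Longrightarrow> B \<in> carrier_mat k k \<Longrightarrow> C \<in> carrier_mat k k \<Longrightarrow> A * B * C = A * (B * C)"
  by (rule assoc_mult_mat)

definition fro :: "nat \<Rightarrow> complex mat \<Rightarrow> real" where
  "fro k M = Re (tau k (madj M * M))"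

lemma fro_entries:
  assumes "M \<in> carrier_mat k k"
  shows "fro k M = (\<Sum>i<k. \<Sum>t<k. (cmod (M $$ (t,i)))\<^sup>2) / real k"
proof -
  have "mtrace (madj M * M) = (\<Sum>i<k. (madj M * M) $$ (i,i))"
    using assms by (simp add: mtrace_def)
  also have "\<dots> = (\<Sum>i<k. \<Sum>t<k. cnj (M $$ (t,i)) * M $$ (t,i))"
    by (intro sum.cong refl) (simp add: mult_index_k[OF madj_carrier[OF assms] assms] madj_index_k[OF assms])
  also have "\<dots> = (\<Sum>i<k. \<Sum>t<k. complex_of_real ((cmod (M $$ (t,i)))\<^sup>2))"
    by (intro sum.cong refl) (metis complex_norm_square mult.commute)
  finally show ?thesis by (simp add: fro_def tau_def)
qed

lemma tuple_diff_length[simp]: "length (tuple_diff a b) = min (length a) (length b)"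
  by (simp add: tuple_diff_def)

lemma tuple_diff_nth: "l < length a \<Longrightarrow> l < length b \<Longrightarrow> tuple_diff a b ! l = a ! l - b ! l"
  by (simp add: tuple_diff_def)

lemma norm2_fro: "norm2 k D = sqrt (\<Sum>l<length D. fro k (D ! l))"
  by (simp add: norm2_def fro_def)

definition cl :: "nat \<Rightarrow> complex mat list \<Rightarrow> bool" where
  "cl k D \<longleftrightarrow> (\<forall>M\<in>set D. M \<in> carrier_mat k k)"

lemma cl_nth: "cl k D \<Longrightarrow> l < length D \<Longrightarrow> D ! l \<in> carrier_mat k k"
  by (simp add: cl_def)

lemma sum3: "(\<Sum>x\<in>A \<times> B \<times> C. h x) = (\<Sum>a\<in>A. \<Sum>b\<in>B. \<Sum>c\<in>C. h (a,b,c))"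
  by (simp add: sum.cartesian_product case_prod_beta)

lemma norm2_L2:
  assumes "cl k D"
  shows "norm2 k D = L2_set (\<lambda>(l,i,t). cmod (D ! l $$ (t,i)) / sqrt k) ({..<length D} \<times> {..<k} \<times> {..<k})"
proof -
  have "(\<Sum>l<length D. fro k (D ! l)) = (\<Sum>l<length D. \<Sum>i<k. \<Sum>t<k. (cmod (D ! l $$ (t,i)))\<^sup>2 / real k)"
    using assms by (simp add: fro_entries cl_nth sum_divide_distrib)
  also have "\<dots> = (\<Sum>x\<in>{..<length D} \<times> {..<k} \<times> {..<k}. ((\<lambda>(l,i,t). cmod (D ! l $$ (t,i)) / sqrt k) x)\<^sup>2)"
    by (simp only: sum3) (simp add: power_divide)
  finally show ?thesis by (simp add: norm2_fro L2_set_def)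
qed

definition dd :: "nat \<Rightarrow> complex mat list \<Rightarrow> complex mat list \<Rightarrow> real" where
  "dd k a b = norm2 k (tuple_diff a b)"

lemma cl_diff: "cl k a \<Longrightarrow> cl k b \<Longrightarrow> cl k (tuple_diff a b)"
  by (auto simp: cl_def tuple_diff_def set_zip intro!: minus_carrier_mat)

lemma dd_triangle:
  assumes "cl k a" "cl k b" "cl k c" "length a = length b" "length b = length c"
  shows "dd k a c \<le> dd k a b + dd k b c"
proof -
  let ?S = "{..<length a} \<times> {..<k} \<times> {..<k}"
  let ?f = "\<lambda>(l,i,t). cmod (tuple_diff a b ! l $$ (t,i)) / sqrt k"
  let ?g = "\<lambda>(l,i,t). cmod (tuple_diff b c ! l $$ (t,i)) / sqrt k"
  have "dd k a c = L2_set (\<lambda>(l,i,t). cmod (tuple_diff a c ! l $$ (t,i)) / sqrt k) ?S"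
    using assms by (simp add: dd_def norm2_L2 cl_diff)
  also have "\<dots> \<le> L2_set (\<lambda>x. ?f x + ?g x) ?S"
  proof (rule L2_set_mono)
    fix x assume "x \<in> ?S"
    then obtain l i t where x: "x = (l,i,t)" "l < length a" "i < k" "t < k" by auto
    have c: "a ! l \<in> carrier_mat k k" "b ! l \<in> carrier_mat k k" "c ! l \<in> carrier_mat k k"
      using x assms by (auto simp: cl_nth)
    have "tuple_diff a c ! l $$ (t,i) = tuple_diff a b ! l $$ (t,i) + tuple_diff b c ! l $$ (t,i)"
      using x c assms by (simp add: tuple_diff_nth)
    then have "cmod (tuple_diff a c ! l $$ (t,i)) \<le> cmod (tuple_diff a b ! l $$ (t,i)) + cmod (tuple_diff b c ! l $$ (t,i))"
      by (simp add: norm_triangle_ineq)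
    then show "(\<lambda>(l,i,t). cmod (tuple_diff a c ! l $$ (t,i)) / sqrt k) x \<le> ?f x + ?g x"
      using x by (simp add: add_divide_distrib[symmetric] divide_right_mono)
  qed auto
  also have "\<dots> \<le> L2_set ?f ?S + L2_set ?g ?S" by (rule L2_set_triangle_ineq)
  also have "\<dots> = dd k a b + dd k b c"
    using assms by (simp add: dd_def norm2_L2 cl_diff)
  finally show ?thesis .
qed

lemma dd_sym:
  assumes "cl k a" "cl k b" "length a = length b"
  shows "dd k a b = dd k b a"
proof -
  have "L2_set (\<lambda>(l,i,t). cmod (tuple_diff a b ! l $$ (t,i)) / sqrt k) ({..<length a} \<times> {..<k} \<times> {..<k})
      = L2_set (\<lambda>(l,i,t). cmod (tuple_diff b a ! l $$ (t,i)) / sqrt k) ({..<length a} \<times> {..<k} \<times> {..<k})"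
  proof (rule L2_set_cong[OF refl])
    fix x assume "x \<in> {..<length a} \<times> {..<k} \<times> {..<k}"
    then obtain l i t where x: "x = (l,i,t)" "l < length a" "i < k" "t < k" by auto
    have c: "a ! l \<in> carrier_mat k k" "b ! l \<in> carrier_mat k k"
      using x assms by (auto simp: cl_nth)
    show "(\<lambda>(l,i,t). cmod (tuple_diff a b ! l $$ (t,i)) / sqrt k) x = (\<lambda>(l,i,t). cmod (tuple_diff b a ! l $$ (t,i)) / sqrt k) x"
      using x c assms by (simp add: tuple_diff_nth norm_minus_commute)
  qed
  then show ?thesis using assms by (simp add: dd_def norm2_L2 cl_diff)
qed

section \<open>Unitary invariance\<close>

lemma mtrace_k:
  assumes A: "A \<in> carrier_mat k k" and B: "B \<in> carrier_mat k k"
  shows "mtrace (A * B) = (\<Sum>i<k. \<Sum>t<k. A $$ (i,t) * B $$ (t,i))"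
proof -
  have d: "dim_row (A * B) = k" using A by (simp add: carrier_matD)
  show ?thesis unfolding mtrace_def d
    by (rule sum.cong[OF refl]) (rule mult_index_k[OF A B], simp_all)
qed

lemma mtrace_comm:
  assumes "A \<in> carrier_mat k k" "B \<in> carrier_mat k k"
  shows "mtrace (A * B) = mtrace (B * A)"
  unfolding mtrace_k[OF assms] mtrace_k[OF assms(2,1)]
  by (subst sum.swap) (simp add: mult.commute)

lemma unitary_carrier: "W \<in> unitary_mats k \<Longrightarrow> W \<in> carrier_mat k k"
  by (simp add: unitary_mats_def)

lemma fro_conj:
  assumes W: "W \<in> unitary_mats k" and M: "M \<in> carrier_mat k k"
  shows "fro k (W * M * madj W) = fro k M"
proof -
  have cW: "W \<in> carrier_mat k k" using W by (simp add: unitary_mats_def)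
  have cWs: "madj W \<in> carrier_mat k k" using cW by simp
  have cMs: "madj M \<in> carrier_mat k k" using M by simp
  have WsW: "madj W * W = 1\<^sub>m k" using W by (simp add: unitary_mats_def)
  have cWM: "W * M \<in> carrier_mat k k" using cW M by (rule mult_k)
  have cWMs: "W * madj M \<in> carrier_mat k k" using cW cMs by (rule mult_k)
  have "madj (W * M * madj W) = madj (madj W) * madj (W * M)"
    by (rule madj_mult[OF cWM cWs])
  also have "\<dots> = W * (madj M * madj W)"
    using cW M by (simp add: madj_madj madj_mult)
  also have "\<dots> = W * madj M * madj W"
    using assoc_k[OF cW cMs cWs] by simp
  finally have 1: "madj (W * M * madj W) = W * madj M * madj W" .
  have "(W * madj M * madj W) * (W * M * madj W) = (W * madj M) * (madj W * (W * M * madj W))"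
    by (rule assoc_k[OF cWMs cWs mult_k[OF cWM cWs]])
  also have "madj W * (W * M * madj W) = (madj W * W) * (M * madj W)"
    using assoc_k[OF cW M cWs] assoc_k[OF cWs cW mult_k[OF M cWs]] by simp
  also have "\<dots> = M * madj W" using WsW M cWs by simp
  also have "(W * madj M) * (M * madj W) = W * (madj M * M) * madj W"
    using assoc_k[OF cW cMs mult_k[OF M cWs]] assoc_k[OF cMs M cWs] assoc_k[OF cW mult_k[OF cMs M] cWs] by simp
  finally have 2: "madj (W * M * madj W) * (W * M * madj W) = W * (madj M * M) * madj W"
    using 1 by simp
  have cX: "madj M * M \<in> carrier_mat k k" using cMs M by (rule mult_k)
  have "mtrace (W * (madj M * M) * madj W) = mtrace (madj W * (W * (madj M * M)))"
    by (rule mtrace_comm[OF mult_k[OF cW cX] cWs])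
  also have "\<dots> = mtrace (madj M * M)"
    using assoc_k[OF cWs cW cX, symmetric] WsW left_mult_one_mat[OF cX] by simp
  finally show ?thesis using 2 by (simp add: fro_def tau_def)
qed

definition conjW :: "complex mat \<Rightarrow> complex mat list \<Rightarrow> complex mat list" where
  "conjW W a = map (\<lambda>B. W * B * madj W) a"

lemma conjW_length[simp]: "length (conjW W a) = length a" by (simp add: conjW_def)

lemma cl_conjW: "W \<in> carrier_mat k k \<Longrightarrow> cl k a \<Longrightarrow> cl k (conjW W a)"
  by (auto simp: cl_def conjW_def intro!: mult_k)

lemma dd_conj:
  assumes W: "W \<in> unitary_mats k" and a: "cl k a" and b: "cl k b" and len: "length a = length b"
  shows "dd k (conjW W a) (conjW W b) = dd k a b"
proof -
  have cW: "W \<in> carrier_mat k k" using W by (simp add: unitary_mats_def)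
  have "fro k (tuple_diff (conjW W a) (conjW W b) ! l) = fro k (tuple_diff a b ! l)" if l: "l < length a" for l
  proof -
    have ca: "a ! l \<in> carrier_mat k k" and cb: "b ! l \<in> carrier_mat k k" using a b l len by (auto simp: cl_nth)
    have "W * (a ! l) * madj W - W * (b ! l) * madj W = W * (a ! l - b ! l) * madj W"
      by (simp only: mult_minus_distrib_mat[OF cW ca cb] minus_mult_distrib_mat[OF mult_k[OF cW ca] mult_k[OF cW cb] madj_carrier[OF cW]])
    then have "tuple_diff (conjW W a) (conjW W b) ! l = W * (a ! l - b ! l) * madj W"
      using l len by (simp add: tuple_diff_nth conjW_def)
    moreover have "tuple_diff a b ! l = a ! l - b ! l" using l len by (simp add: tuple_diff_nth)
    ultimately show ?thesis using fro_conj[OF W minus_carrier_mat[OF cb]] by simp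
  qed
  then show ?thesis using len by (simp add: dd_def norm2_fro)
qed

lemma unitary_mult: "V \<in> unitary_mats k \<Longrightarrow> W \<in> unitary_mats k \<Longrightarrow> W * V \<in> unitary_mats k"
proof -
  assume V: "V \<in> unitary_mats k" and W: "W \<in> unitary_mats k"
  have cV: "V \<in> carrier_mat k k" and cW: "W \<in> carrier_mat k k" using V W by (simp_all add: unitary_mats_def)
  have cVs: "madj V \<in> carrier_mat k k" and cWs: "madj W \<in> carrier_mat k k" using cV cW by simp_all
  have m: "madj (W * V) = madj V * madj W" by (rule madj_mult[OF cW cV])
  have "W * V * (madj V * madj W) = W * ((V * madj V) * madj W)"
    using assoc_k[OF cW cV mult_k[OF cVs cWs]] assoc_k[OF cV cVs cWs] by simp
  also have "\<dots> = 1\<^sub>m k" using V W left_mult_one_mat[OF cWs] by (simp add: unitary_mats_def)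
  finally have 1: "W * V * madj (W * V) = 1\<^sub>m k" using m by simp
  have "madj V * madj W * (W * V) = madj V * ((madj W * W) * V)"
    using assoc_k[OF cVs cWs mult_k[OF cW cV]] assoc_k[OF cWs cW cV] by simp
  also have "\<dots> = 1\<^sub>m k" using V W cV by (simp add: unitary_mats_def)
  finally have 2: "madj (W * V) * (W * V) = 1\<^sub>m k" using m by simp
  show ?thesis using 1 2 mult_k[OF cW cV] by (simp add: unitary_mats_def)
qed

lemma unitary_madj: "V \<in> unitary_mats k \<Longrightarrow> madj V \<in> unitary_mats k"
  by (auto simp: unitary_mats_def madj_madj)

lemma conjW_conjW:
  assumes cW: "W \<in> carrier_mat k k" and cV: "V \<in> carrier_mat k k" and a: "cl k a"
  shows "conjW W (conjW V a) = conjW (W * V) a"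
proof -
  have "W * (V * B * madj V) * madj W = W * V * B * madj (W * V)" if B: "B \<in> carrier_mat k k" for B
  proof -
    have cVs: "madj V \<in> carrier_mat k k" and cWs: "madj W \<in> carrier_mat k k" using cV cW by simp_all
    have "W * V * B * madj (W * V) = W * V * B * (madj V * madj W)" by (simp add: madj_mult[OF cW cV])
    also have "\<dots> = W * (V * B * madj V) * madj W"
      using assoc_k[OF cW cV B] assoc_k[OF cW mult_k[OF cV B] cVs] assoc_k[OF mult_k[OF cW cV] B mult_k[OF cVs cWs]]
        assoc_k[OF mult_k[OF cW mult_k[OF cV B]] cVs cWs] by simp
    finally show ?thesis by simp
  qed
  then show ?thesis using a by (auto simp: conjW_def cl_def)
qed

lemma conjW_inv:
  assumes V: "V \<in> unitary_mats k" and a: "cl k a"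
  shows "conjW V (conjW (madj V) a) = a"
proof -
  have cV: "V \<in> carrier_mat k k" using V by (simp add: unitary_mats_def)
  have "conjW V (conjW (madj V) a) = conjW (V * madj V) a"
    using conjW_conjW[OF cV madj_carrier[OF cV] a] .
  also have "\<dots> = a"
  proof -
    have "V * madj V = 1\<^sub>m k" using V by (simp add: unitary_mats_def)
    then show ?thesis using a by (auto simp: conjW_def cl_def intro!: map_idI)
  qed
  finally show ?thesis .
qed

section \<open>Covering numbers\<close>

lemma orbit_ball_iff:
  "a \<in> orbit_ball k c w \<longleftrightarrow> length a = length c \<and> cl k a \<and> (\<exists>W\<in>unitary_mats k. dd k a (conjW W c) < w)"
  by (simp add: orbit_ball_def cl_def dd_def conjW_def)

lemma ball_shift:
  assumes a: "a \<in> orbit_ball k c w" and s: "s \<in> orbit_ball k c w" and c: "cl k c"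
  shows "a \<in> orbit_ball k s (2 * w)"
proof -
  obtain W where W: "W \<in> unitary_mats k" "dd k a (conjW W c) < w" and la: "length a = length c" and ca: "cl k a"
    using a by (auto simp: orbit_ball_iff)
  obtain V where V: "V \<in> unitary_mats k" "dd k s (conjW V c) < w" and ls: "length s = length c" and cs: "cl k s"
    using s by (auto simp: orbit_ball_iff)
  have cW: "W \<in> carrier_mat k k" and cV: "V \<in> carrier_mat k k" using W V by (simp_all add: unitary_carrier)
  let ?U = "W * madj V"
  have U: "?U \<in> unitary_mats k" by (rule unitary_mult[OF unitary_madj[OF V(1)] W(1)])
  have csV: "cl k (conjW (madj V) s)" using cs cV by (simp add: cl_conjW)
  have eq: "conjW ?U s = conjW W (conjW (madj V) s)"
    using conjW_conjW[OF cW madj_carrier[OF cV] cs] by simp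
  have "dd k (conjW W c) (conjW ?U s) = dd k c (conjW (madj V) s)"
    unfolding eq using dd_conj[OF W(1) c csV] ls by simp
  also have "\<dots> = dd k (conjW V c) (conjW V (conjW (madj V) s))"
    using dd_conj[OF V(1) c csV] ls by simp
  also have "\<dots> = dd k (conjW V c) s" using conjW_inv[OF V(1) cs] by simp
  also have "\<dots> = dd k s (conjW V c)"
    using dd_sym[OF cl_conjW[OF cV c] cs] ls by simp
  finally have d2: "dd k (conjW W c) (conjW ?U s) < w" using V(2) by simp
  have "dd k a (conjW ?U s) \<le> dd k a (conjW W c) + dd k (conjW W c) (conjW ?U s)"
    by (rule dd_triangle) (use ca cl_conjW[OF cW c] cl_conjW[OF unitary_carrier[OF U] cs] la ls in auto)
  also have "\<dots> < 2 * w" using W(2) d2 by simp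
  finally show ?thesis using U la ls ca by (auto simp: orbit_ball_iff)
qed

lemma o2_mono:
  assumes sub: "\<Sigma>' \<subseteq> \<Sigma>" and cls: "\<forall>b\<in>\<Sigma>. cl k b"
  shows "o2 k \<Sigma>' (2 * w) \<le> o2 k \<Sigma> w"
  unfolding o2_def
proof (rule Inf_greatest)
  fix x assume "x \<in> {enat (card C) |C. finite C \<and> C \<subseteq> \<Sigma> \<and> \<Sigma> \<subseteq> (\<Union>B\<in>C. orbit_ball k B w)}"
  then obtain C where x: "x = enat (card C)" and C: "finite C" "C \<subseteq> \<Sigma>" "\<Sigma> \<subseteq> (\<Union>B\<in>C. orbit_ball k B w)"
    by blast
  let ?C0 = "{c\<in>C. \<Sigma>' \<inter> orbit_ball k c w \<noteq> {}}"
  define f where "f c = (SOME s. s \<in> \<Sigma>' \<inter> orbit_ball k c w)" for c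
  have f: "f c \<in> \<Sigma>' \<inter> orbit_ball k c w" if "c \<in> ?C0" for c
  proof -
    have "\<exists>s. s \<in> \<Sigma>' \<inter> orbit_ball k c w" using that by blast
    then show ?thesis unfolding f_def by (rule someI_ex)
  qed
  let ?C' = "f ` ?C0"
  have fin: "finite ?C'" using C(1) by simp
  have sub': "?C' \<subseteq> \<Sigma>'" using f by auto
  have cov: "\<Sigma>' \<subseteq> (\<Union>B\<in>?C'. orbit_ball k B (2 * w))"
  proof
    fix a assume a: "a \<in> \<Sigma>'"
    then obtain c where c: "c \<in> C" "a \<in> orbit_ball k c w" using C(3) sub by blast
    then have c0: "c \<in> ?C0" using a by blast
    have "a \<in> orbit_ball k (f c) (2 * w)"
      by (rule ball_shift[OF c(2)]) (use f[OF c0] cls C(2) c(1) in auto)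
    then show "a \<in> (\<Union>B\<in>?C'. orbit_ball k B (2 * w))" using c0 by blast
  qed
  have "o2 k \<Sigma>' (2 * w) \<le> enat (card ?C')"
    unfolding o2_def by (rule Inf_lower, rule CollectI, intro exI[of _ ?C'] conjI refl fin sub' cov)
  also have "\<dots> \<le> enat (card C)"
    using card_image_le[of ?C0 f] card_mono[OF C(1), of ?C0] C(1) by simp
  finally show "Inf {enat (card C) |C. finite C \<and> C \<subseteq> \<Sigma>' \<and> \<Sigma>' \<subseteq> (\<Union>B\<in>C. orbit_ball k B (2 * w))} \<le> x"
    unfolding x o2_def .
qed

section \<open>Main inclusion\<close>

definition goodp :: "'a::cstar_algebra list \<Rightarrow> 'a \<Rightarrow> real \<Rightarrow> ncpoly \<Rightarrow> bool" where
  "goodp xs y0 e p \<longleftrightarrow> p \<in> rat_ncpolys (length xs) \<and> norm (eval_alg p xs - y0) < e \<and>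
     (\<forall>k As. length As = length xs \<longrightarrow> (\<forall>A\<in>set As. A \<in> sa_mats k) \<longrightarrow> eval_mat k p As \<in> sa_mats k)"

lemma sa_approx_ex:
  assumes "\<forall>a\<in>set xs. adj a = a" "y0 \<in> closure (Dset xs)" "adj y0 = y0" "e > 0"
  shows "\<exists>p. goodp xs y0 e p"
proof (rule sa_approx[OF assms])
  fix p assume "p \<in> rat_ncpolys (length xs)" "norm (eval_alg p xs - y0) < e"
    and h: "\<And>k As. length As = length xs \<Longrightarrow> \<forall>A\<in>set As. A \<in> sa_mats k \<Longrightarrow> eval_mat k p As \<in> sa_mats k"
  then show ?thesis unfolding goodp_def by blast
qed

lemma approx_seq:
  assumes sax: "\<forall>a\<in>set x. adj a = a" and say: "\<forall>b\<in>set y. adj b = b"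
    and gen: "set y \<subseteq> cstar_generated (set x)"
  obtains pp where "\<And>l k. l < length y \<Longrightarrow> goodp x (y ! l) (inverse (real (Suc k))) (pp l k)"
proof -
  define pp where "pp l k = (SOME p. goodp x (y ! l) (inverse (real (Suc k))) p)" for l k
  have "goodp x (y ! l) (inverse (real (Suc k))) (pp l k)" if l: "l < length y" for l k
  proof -
    have yl: "y ! l \<in> set y" using l by simp
    have "y ! l \<in> closure (Dset x)" using yl gen generated_in_closure[OF sax] by blast
    moreover have "adj (y ! l) = y ! l" using yl say by blast
    moreover have "inverse (real (Suc k)) > 0" by simp
    ultimately obtain p where "goodp x (y ! l) (inverse (real (Suc k))) p"
      using sa_approx_ex[OF sax] by blast
    then show ?thesis unfolding pp_def by (rule someI)
  qed
  then show ?thesis using that by blast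
qed

lemma main_incl:
  fixes x y :: "'a::cstar_algebra list"
  assumes sax: "\<forall>a\<in>set x. adj a = a" and say: "\<forall>b\<in>set y. adj b = b"
    and gen: "set y \<subseteq> cstar_generated (set x)"
    and Psurj: "\<And>c. c \<in> rat_ncpolys (length x) \<Longrightarrow> \<exists>i. P i = c"
    and Qrat: "\<And>j. Q j \<in> rat_ncpolys (length x + length y)"
    and eps: "\<epsilon> > 0" and RR: "R \<le> R'" and M: "\<And>b. b \<in> set y \<Longrightarrow> norm b + 2 \<le> R'"
  shows "\<exists>\<epsilon>'>0. \<exists>r'\<ge>1. \<forall>k. Gamma_top x [] P R k \<epsilon>' r' \<subseteq> Gamma_top x y Q R' k \<epsilon> r"
proof -
  let ?n = "length x" and ?m = "length y"
  obtain pp where pp: "\<And>l k. l < ?m \<Longrightarrow> goodp x (y ! l) (inverse (real (Suc k))) (pp l k)"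
    using approx_seq[OF sax say gen] by blast
  define ps where "ps k = map (\<lambda>l. pp l k) [0..<?m]" for k
  define zs where "zs k = x @ map (\<lambda>p. eval_alg p x) (ps k)" for k
  have lps[simp]: "length (ps k) = ?m" for k by (simp add: ps_def)
  have zs_nth: "zs k ! i = (if i < ?n then x ! i else eval_alg (pp (i - ?n) k) x)" if "i < ?n + ?m" for i k
    using that by (simp add: zs_def ps_def nth_append)
  have conv: "((\<lambda>k. zs k ! i) \<longlongrightarrow> (x @ y) ! i) sequentially" if i: "i < ?n + ?m" for i
  proof (cases "i < ?n")
    case True
    then show ?thesis using i by (simp add: zs_nth nth_append)
  next
    case False
    let ?l = "i - ?n"
    have l: "?l < ?m" using i False by simp
    have "((\<lambda>k. eval_alg (pp ?l k) x - y ! ?l) \<longlongrightarrow> 0) sequentially"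
    proof (rule Lim_null_comparison)
      show "\<forall>\<^sub>F k in sequentially. norm (eval_alg (pp ?l k) x - y ! ?l) \<le> inverse (real (Suc k))"
        using pp[OF l] by (auto simp: goodp_def less_imp_le)
      show "((\<lambda>k. inverse (real (Suc k))) \<longlongrightarrow> 0) sequentially" by (rule LIMSEQ_inverse_real_of_nat)
    qed
    then have "((\<lambda>k. eval_alg (pp ?l k) x) \<longlongrightarrow> y ! ?l) sequentially" by (rule LIM_zero_cancel)
    then show ?thesis using i False by (simp add: zs_nth nth_append)
  qed
  have convQ: "((\<lambda>k. eval_alg (Q j) (zs k)) \<longlongrightarrow> eval_alg (Q j) (x @ y)) sequentially" for j
  proof (rule tendsto_eval_alg, intro ballI)
    fix w i assume "w \<in> Poly_Mapping.keys (Q j)" "i \<in> set w"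
    then have "i < ?n + ?m" using Qrat[of j] by (auto simp: rat_ncpolys_iff vars_in_def)
    then show "((\<lambda>k. zs k ! i) \<longlongrightarrow> (x @ y) ! i) sequentially" by (rule conv)
  qed
  have "\<forall>\<^sub>F k in sequentially. \<forall>j\<in>{..<r}. dist (eval_alg (Q j) (zs k)) (eval_alg (Q j) (x @ y)) < \<epsilon> / 2"
  proof (rule eventually_ball_finite)
    show "finite {..<r}" by simp
    show "\<forall>j\<in>{..<r}. \<forall>\<^sub>F k in sequentially. dist (eval_alg (Q j) (zs k)) (eval_alg (Q j) (x @ y)) < \<epsilon> / 2"
    proof
      fix j
      have "\<forall>e>0. \<forall>\<^sub>F k in sequentially. dist (eval_alg (Q j) (zs k)) (eval_alg (Q j) (x @ y)) < e"
        using convQ[of j] by (simp only: tendsto_iff)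
      then show "\<forall>\<^sub>F k in sequentially. dist (eval_alg (Q j) (zs k)) (eval_alg (Q j) (x @ y)) < \<epsilon> / 2"
        using half_gt_zero[OF eps] by blast
    qed
  qed
  then obtain k0 where k0: "\<forall>j<r. norm (eval_alg (Q j) (zs k0) - eval_alg (Q j) (x @ y)) < \<epsilon> / 2"
    by (auto simp: eventually_sequentially dist_norm)
  let ?ps = "ps k0"
  have ps_rat: "\<forall>p\<in>set ?ps. p \<in> rat_ncpolys ?n"
    using pp by (auto simp: ps_def goodp_def)
  have ps_nth: "?ps ! l = pp l k0" if "l < ?m" for l using that by (simp add: ps_def)
  have ps_close: "norm (eval_alg (?ps ! l) x - y ! l) < 1" if l: "l < ?m" for l
  proof -
    have "norm (eval_alg (?ps ! l) x - y ! l) < inverse (real (Suc k0))"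
      using pp[OF l] ps_nth[OF l] by (simp add: goodp_def)
    also have "\<dots> \<le> 1" by (simp add: field_simps)
    finally show ?thesis .
  qed
  define c where "c j = sub ?n (Q j) ?ps" for j
  have c_rat: "c j \<in> rat_ncpolys ?n" for j
    unfolding c_def by (rule rat_sub[OF ps_rat]) (simp add: Qrat)
  define aidx where "aidx j = (SOME i. P i = c j)" for j
  define bidx where "bidx l = (SOME i. P i = ?ps ! l)" for l
  have Paidx: "P (aidx j) = c j" for j
    unfolding aidx_def using Psurj[OF c_rat[of j]] by (rule someI_ex)
  have Pbidx: "P (bidx l) = ?ps ! l" if "l < ?m" for l
  proof -
    have "?ps ! l \<in> rat_ncpolys ?n" using ps_rat that nth_mem[of l ?ps] by simp
    then show ?thesis unfolding bidx_def by (rule someI_ex[OF Psurj])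
  qed
  define r' where "r' = Suc (Max (aidx ` {..<r} \<union> bidx ` {..<?m}))"
  have aidx_lt: "aidx j < r'" if "j < r" for j
    using that unfolding r'_def by (simp add: le_imp_less_Suc)
  have bidx_lt: "bidx l < r'" if "l < ?m" for l
    using that unfolding r'_def by (simp add: le_imp_less_Suc)
  define \<epsilon>' where "\<epsilon>' = min (\<epsilon> / 2) 1"
  have e'pos: "\<epsilon>' > 0" using eps by (simp add: \<epsilon>'_def)
  have "Gamma_top x [] P R k \<epsilon>' r' \<subseteq> Gamma_top x y Q R' k \<epsilon> r" for k
  proof
    fix As assume As: "As \<in> Gamma_top x [] P R k \<epsilon>' r'"
    then have lAs: "length As = ?n" and saAs: "\<forall>A\<in>set As. A \<in> sa_mats k"
      and nAs: "\<forall>C\<in>set As. opnorm k C \<le> R"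
      and cons: "\<forall>j<r'. \<bar>opnorm k (eval_mat k (P j) As) - norm (eval_alg (P j) x)\<bar> \<le> \<epsilon>'"
      by (auto simp: Gamma_top_def)
    have carAs: "\<forall>A\<in>set As. A \<in> carrier_mat k k" using saAs by (simp add: sa_mats_def)
    define Bs where "Bs = map (\<lambda>p. eval_mat k p As) ?ps"
    have lBs: "length Bs = ?m" by (simp add: Bs_def)
    have saBs: "\<forall>B\<in>set Bs. B \<in> sa_mats k"
      using pp lAs saAs by (auto simp: Bs_def ps_def goodp_def)
    have nBs: "opnorm k (Bs ! l) \<le> R'" if l: "l < ?m" for l
    proof -
      have "Bs ! l = eval_mat k (P (bidx l)) As" using l Pbidx[OF l] by (simp add: Bs_def)
      moreover have "\<bar>opnorm k (eval_mat k (P (bidx l)) As) - norm (eval_alg (P (bidx l)) x)\<bar> \<le> \<epsilon>'"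
        using cons bidx_lt[OF l] by blast
      ultimately have "opnorm k (Bs ! l) \<le> norm (eval_alg (?ps ! l) x) + \<epsilon>'"
        using Pbidx[OF l] by (simp add: abs_le_iff)
      also have "norm (eval_alg (?ps ! l) x) \<le> norm (y ! l) + 1"
        using ps_close[OF l] norm_triangle_ineq2[of "eval_alg (?ps ! l) x" "y ! l"] by simp
      also have "\<epsilon>' \<le> 1" by (simp add: \<epsilon>'_def)
      finally show ?thesis using M[of "y ! l"] l by simp
    qed
    have nAll: "\<forall>C\<in>set (As @ Bs). opnorm k C \<le> R'"
    proof
      fix C assume "C \<in> set (As @ Bs)"
      then consider "C \<in> set As" | "C \<in> set Bs" by auto
      then show "opnorm k C \<le> R'"
      proof cases
        case 1 then have "opnorm k C \<le> R" using nAs by blast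
        then show ?thesis using RR by linarith
      next
        case 2 then obtain l where "l < ?m" "C = Bs ! l" using lBs in_set_conv_nth[of C Bs] by auto
        then show ?thesis using nBs by simp
      qed
    qed
    have consQ: "\<bar>opnorm k (eval_mat k (Q j) (As @ Bs)) - norm (eval_alg (Q j) (x @ y))\<bar> \<le> \<epsilon>" if j: "j < r" for j
    proof -
      have e1: "eval_mat k (Q j) (As @ Bs) = eval_mat k (P (aidx j)) As"
        unfolding Paidx c_def Bs_def
        by (rule eval_mat_sub[symmetric]) (use lAs carAs ps_rat Qrat in auto)
      have e2: "eval_alg (P (aidx j)) x = eval_alg (Q j) (zs k0)"
        unfolding Paidx c_def zs_def by (rule eval_alg_sub) (use Qrat in auto)
      have "\<bar>opnorm k (eval_mat k (P (aidx j)) As) - norm (eval_alg (P (aidx j)) x)\<bar> \<le> \<epsilon>'"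
        using cons aidx_lt[OF j] by simp
      moreover have "\<bar>norm (eval_alg (Q j) (zs k0)) - norm (eval_alg (Q j) (x @ y))\<bar> < \<epsilon> / 2"
        using norm_triangle_ineq3[of "eval_alg (Q j) (zs k0)" "eval_alg (Q j) (x @ y)"] k0 j by fastforce
      moreover have "\<epsilon>' \<le> \<epsilon> / 2" by (simp add: \<epsilon>'_def)
      ultimately show ?thesis unfolding e1 e2 by linarith
    qed
    show "As \<in> Gamma_top x y Q R' k \<epsilon> r"
      unfolding Gamma_top_def mem_Collect_eq
      by (intro conjI exI[of _ Bs] lAs saAs lBs saBs nAll allI impI consQ) simp_all
  qed
  moreover have "r' \<ge> 1" by (simp add: r'_def)
  ultimately show ?thesis using e'pos by (intro exI[of _ \<epsilon>'] conjI exI[of _ r']) simp_all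
qed

lemma log_cov_mono:
  assumes "N \<le> M"
  shows "log_cov N \<le> log_cov M"
proof (cases M)
  case infinity then show ?thesis by (simp add: log_cov_def)
next
  case (enat b)
  then obtain a where a: "N = enat a" "a \<le> b" using assms by (cases N) auto
  show ?thesis
  proof (cases "a = 0")
    case True then have "N = 0" using a by (simp add: zero_enat_def)
    then show ?thesis by (simp add: log_cov_def)
  next
    case False
    then have "ln (real a) \<le> ln (real b)" using a by simp
    then show ?thesis using a False enat by (auto simp: log_cov_def zero_enat_def)
  qed
qed

lemma limsup_cov_mono:
  assumes "\<And>k. k \<ge> 1 \<Longrightarrow> f k \<le> g k"
  shows "limsup (\<lambda>k. log_cov (f k) / ereal ((real k)\<^sup>2)) \<le> limsup (\<lambda>k. log_cov (g k) / ereal ((real k)\<^sup>2))"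
proof (rule Limsup_mono)
  show "\<forall>\<^sub>F k in sequentially. log_cov (f k) / ereal ((real k)\<^sup>2) \<le> log_cov (g k) / ereal ((real k)\<^sup>2)"
    unfolding eventually_sequentially
  proof (intro exI[of _ 1] allI impI)
    fix k :: nat assume k: "k \<ge> 1"
    have "ereal ((real k)\<^sup>2) > 0" using k by simp
    then show "log_cov (f k) / ereal ((real k)\<^sup>2) \<le> log_cov (g k) / ereal ((real k)\<^sup>2)"
      using log_cov_mono[OF assms[OF k]] by (rule ereal_divide_right_mono[rotated])
  qed
qed

lemma Gamma_cl: "\<forall>b\<in>Gamma_top xs ys P R k \<epsilon> r. cl k b"
  by (auto simp: Gamma_top_def cl_def sa_mats_def)

lemma rat_ncpolys_mono:
  assumes "N \<le> N'" shows "rat_ncpolys N \<subseteq> rat_ncpolys N'"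
proof
  fix p assume "p \<in> rat_ncpolys N"
  moreover have "{..<N} \<subseteq> {..<N'}" using assms by auto
  ultimately show "p \<in> rat_ncpolys N'" unfolding rat_ncpolys_iff vars_in_def by (meson subset_trans)
qed

theorem lemma3p2:
  fixes x y :: "'a::cstar_algebra list"
    and P Q :: "nat \<Rightarrow> ncpoly"
    and \<omega> :: real
  assumes "\<forall>a\<in>set x. adj a = a"
    and "\<forall>b\<in>set y. adj b = b"
    and "set y \<subseteq> cstar_generated (set x)"
    and "bij_betw P UNIV (rat_ncpolys (length x))"
    and "bij_betw Q UNIV (rat_ncpolys (length x + length y))"
    and "\<omega> > 0"
  shows "Ktop x [] P (4 * \<omega>) \<le> Ktop x y Q (2 * \<omega>) \<and> Ktop x y Q (2 * \<omega>) \<le> Ktop x [] P \<omega>"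
proof
  note sax = assms(1) and say = assms(2) and gen = assms(3)
  let ?n = "length x" and ?m = "length y"
  have Pimg: "P ` UNIV = rat_ncpolys ?n" using assms(4) by (simp add: bij_betw_def)
  have Qimg: "Q ` UNIV = rat_ncpolys (?n + ?m)" using assms(5) by (simp add: bij_betw_def)
  have Psurj: "\<exists>i. P i = c" if "c \<in> rat_ncpolys ?n" for c using that Pimg by (metis imageE)
  have Qrat: "Q j \<in> rat_ncpolys (?n + ?m)" for j using Qimg by blast
  have Prat: "P j \<in> rat_ncpolys ?n" for j using Pimg by blast
  define G where "G xs ys Pe R \<epsilon> r w = limsup (\<lambda>k. log_cov (o2 k (Gamma_top xs ys Pe R k \<epsilon> r) w) / ereal ((real k)\<^sup>2))"
    for xs ys :: "'a list" and Pe R \<epsilon> r w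
  have K: "Ktop xs ys Pe w = (SUP R\<in>{0<..}. INF \<epsilon>\<in>{0<..}. INF r\<in>{1..}. G xs ys Pe R \<epsilon> r w)" for xs ys Pe w
    by (simp add: Ktop_def G_def)
  have Gmono: "G xs ys Pe R \<epsilon> r (2 * w) \<le> G xs' ys' Pe' R' \<epsilon>' r' w"
    if "\<And>k. Gamma_top xs ys Pe R k \<epsilon> r \<subseteq> Gamma_top xs' ys' Pe' R' k \<epsilon>' r'" for xs ys xs' ys' Pe Pe' R \<epsilon> r R' \<epsilon>' r' w
    unfolding G_def by (rule limsup_cov_mono) (rule o2_mono[OF that Gamma_cl])
  show "Ktop x [] P (4 * \<omega>) \<le> Ktop x y Q (2 * \<omega>)"
    unfolding K
  proof (rule SUP_mono)
    fix R :: real assume R: "R \<in> {0<..}"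
    define R' where "R' = max R (Max (insert 0 (norm ` set y)) + 2)"
    have R'pos: "R' \<in> {0<..}" using R by (simp add: R'_def)
    have RR: "R \<le> R'" by (simp add: R'_def)
    have M: "norm b + 2 \<le> R'" if "b \<in> set y" for b
    proof -
      have "norm b \<le> Max (insert 0 (norm ` set y))" using that by (intro Max_ge) auto
      then show ?thesis by (simp add: R'_def)
    qed
    have "(INF \<epsilon>\<in>{0<..}. INF r\<in>{1..}. G x [] P R \<epsilon> r (4 * \<omega>)) \<le> (INF \<epsilon>\<in>{0<..}. INF r\<in>{1..}. G x y Q R' \<epsilon> r (2 * \<omega>))"
    proof (intro INF_greatest)
      fix \<epsilon> :: real and r :: nat assume e: "\<epsilon> \<in> {0<..}" and r: "r \<in> {1..}"
      obtain \<epsilon>' r' where e': "\<epsilon>' > 0" and r': "r' \<ge> 1"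
        and incl: "\<forall>k. Gamma_top x [] P R k \<epsilon>' r' \<subseteq> Gamma_top x y Q R' k \<epsilon> r"
        using main_incl[where \<epsilon>=\<epsilon> and r=r and P=P and Q=Q, OF sax say gen Psurj Qrat _ RR M] e by auto
      have "(INF \<epsilon>\<in>{0<..}. INF r\<in>{1..}. G x [] P R \<epsilon> r (4 * \<omega>)) \<le> (INF r\<in>{1..}. G x [] P R \<epsilon>' r (4 * \<omega>))"
        using e' by (intro INF_lower) simp
      also have "\<dots> \<le> G x [] P R \<epsilon>' r' (4 * \<omega>)"
        using r' by (intro INF_lower) simp
      also have "\<dots> = G x [] P R \<epsilon>' r' (2 * (2 * \<omega>))" by simp
      also have "\<dots> \<le> G x y Q R' \<epsilon> r (2 * \<omega>)"
        by (rule Gmono) (use incl in blast)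
      finally show "(INF \<epsilon>\<in>{0<..}. INF r\<in>{1..}. G x [] P R \<epsilon> r (4 * \<omega>)) \<le> G x y Q R' \<epsilon> r (2 * \<omega>)" .
    qed
    then show "\<exists>R'\<in>{0<..}. (INF \<epsilon>\<in>{0<..}. INF r\<in>{1..}. G x [] P R \<epsilon> r (4 * \<omega>)) \<le> (INF \<epsilon>\<in>{0<..}. INF r\<in>{1..}. G x y Q R' \<epsilon> r (2 * \<omega>))"
      using R'pos by blast
  qed
  show "Ktop x y Q (2 * \<omega>) \<le> Ktop x [] P \<omega>"
    unfolding K
  proof (rule SUP_mono)
    fix R :: real assume R: "R \<in> {0<..}"
    have "(INF \<epsilon>\<in>{0<..}. INF r\<in>{1..}. G x y Q R \<epsilon> r (2 * \<omega>)) \<le> (INF \<epsilon>\<in>{0<..}. INF r\<in>{1..}. G x [] P R \<epsilon> r \<omega>)"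
    proof (intro INF_greatest)
      fix \<epsilon> :: real and r :: nat assume e: "\<epsilon> \<in> {0<..}" and r: "r \<in> {1..}"
      define idx where "idx j = (SOME i. Q i = P j)" for j
      have Qidx: "Q (idx j) = P j" for j
      proof -
        have "P j \<in> rat_ncpolys (?n + ?m)" using Prat[of j] rat_ncpolys_mono[of ?n "?n + ?m"] by auto
        then have "\<exists>i. Q i = P j" using Qimg by (metis imageE)
        then show ?thesis unfolding idx_def by (rule someI_ex)
      qed
      define r' where "r' = Suc (Max (idx ` {..<r}))"
      have idx_lt: "idx j < r'" if "j < r" for j using that unfolding r'_def by (simp add: le_imp_less_Suc)
      have incl: "Gamma_top x y Q R k \<epsilon> r' \<subseteq> Gamma_top x [] P R k \<epsilon> r" for k
      proof
        fix As assume "As \<in> Gamma_top x y Q R k \<epsilon> r'"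
        then obtain Bs where lAs: "length As = ?n" and saAs: "\<forall>A\<in>set As. A \<in> sa_mats k"
          and nAB: "\<forall>C\<in>set (As @ Bs). opnorm k C \<le> R"
          and cons: "\<forall>j<r'. \<bar>opnorm k (eval_mat k (Q j) (As @ Bs)) - norm (eval_alg (Q j) (x @ y))\<bar> \<le> \<epsilon>"
          by (auto simp: Gamma_top_def)
        have consP: "\<bar>opnorm k (eval_mat k (P j) (As @ [])) - norm (eval_alg (P j) (x @ []))\<bar> \<le> \<epsilon>" if j: "j < r" for j
        proof -
          have v: "vars_in ?n (P j)" using Prat[of j] by (simp add: rat_ncpolys_iff)
          have "\<bar>opnorm k (eval_mat k (Q (idx j)) (As @ Bs)) - norm (eval_alg (Q (idx j)) (x @ y))\<bar> \<le> \<epsilon>"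
            using cons idx_lt[OF j] by blast
          then show ?thesis unfolding Qidx using v lAs by (simp add: eval_mat_restrict eval_alg_restrict)
        qed
        have nA: "\<forall>C\<in>set (As @ []). opnorm k C \<le> R" using nAB by simp
        show "As \<in> Gamma_top x [] P R k \<epsilon> r"
          unfolding Gamma_top_def mem_Collect_eq
          by (intro conjI exI[of _ "[]"] lAs saAs nA allI impI consP) simp_all
      qed
      have "(INF \<epsilon>\<in>{0<..}. INF r\<in>{1..}. G x y Q R \<epsilon> r (2 * \<omega>)) \<le> (INF r\<in>{1..}. G x y Q R \<epsilon> r (2 * \<omega>))"
        using e by (intro INF_lower) simp
      also have "\<dots> \<le> G x y Q R \<epsilon> r' (2 * \<omega>)"
        by (intro INF_lower) (simp add: r'_def)
      also have "\<dots> \<le> G x [] P R \<epsilon> r \<omega>"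
        by (rule Gmono) (rule incl)
      finally show "(INF \<epsilon>\<in>{0<..}. INF r\<in>{1..}. G x y Q R \<epsilon> r (2 * \<omega>)) \<le> G x [] P R \<epsilon> r \<omega>" .
    qed
    then show "\<exists>R'\<in>{0<..}. (INF \<epsilon>\<in>{0<..}. INF r\<in>{1..}. G x y Q R \<epsilon> r (2 * \<omega>)) \<le> (INF \<epsilon>\<in>{0<..}. INF r\<in>{1..}. G x [] P R' \<epsilon> r \<omega>)"
      using R by blast
  qed
qed

end
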